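(* Let $(\Xi,\mathcal{F})$ be a measurable space and let $(\mathbb{X},d_{\mathbb{X}})$ be a metric space which is a Suslin space. Let $P$ and $P^\nu$, $\nu\in\mathbb{N}$, be probability measures on $(\Xi,\mathcal{F})$, and let $f,f^\nu:\Xi\times\mathbb{X}\to\overline{\mathbb{R}}$, $\nu\in\mathbb{N}$, be functions. Suppose that: (i) $f$ and all $f^\nu$ are measurable functions, and $f(\xi,\cdot)$ is lower semicontinuous for $P$-a.e. $\xi\in\Xi$; (ii) there exist a countable dense subset $\mathbb{X}_0$ of $\mathbb{X}$ and an integer $\kappa_0\in\mathbb{N}$ such that $$\liminf_{\nu\to+\infty} E^{P^\nu}\big[f^\nu_\kappa\big](x_0)\ \ge\ E^{P}\big[f_\kappa\big](x_0)\ >\ -\infty$$ for each $x_0\in\mathbb{X}_0$ and each $\kappa\in[\kappa_0,+\infty)$. Then for every $x\in\mathbb{X}$, $$\liminf_{(\nu,y)\to(+\infty,x)} E^{P^\nu}\big[f^\nu\big](y)\ \ge\ E^{P}\big[f\big](x),$$ and moreover the right-hand side exceeds $-\infty$ whenever there exists $\tilde x\in\mathbb{X}$ with $\liminf_{(\nu,y)\to(+\infty,\tilde x)} E^{P^\nu}[f^\nu](y)<+\infty$.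
   Context: $\overline{\mathbb{R}}=\mathbb{R}\cup\{-\infty,+\infty\}$. For a probability $\mu$ and a function $g$ with values in $\overline{\mathbb{R}}$ measurable with respect to (the $\mu$-completion of) the $\sigma$-algebra, $\mathbb{E}^\mu[g]:=\int g_+\,d\mu-\int g_-\,d\mu$ with $g_+=\max\{g,0\}$, $g_-=-\min\{g,0\}$, and the conventions $+\infty-\alpha=+\infty$ for all $\alpha\in\overline{\mathbb{R}}$ (so $\infty-\infty=+\infty$) and $\beta-(+\infty)=-\infty$ for $\beta\in\mathbb{R}$. For an integrand $h:\Xi\times\mathbb{X}\to\overline{\mathbb{R}}$ and probability $Q$, the expectation function is $E^{Q}[h](x):=\mathbb{E}^{Q}[h(\xi,x)]$. For $\kappa\in[0,+\infty)$ the Pasch–Hausdorff envelope is $f_\kappa(\xi,x):=\inf_{x'\in\mathbb{X}}\{f(\xi,x')+\kappa d_{\mathbb{X}}(x,x')\}$, and likewise $f^\nu_\kappa$ from $f^\nu$; when $\mathbb{X}$ is Suslin and $f$ is measurable, $\xi\mapsto f_\kappa(\xi,x)$ is measurable with respect to the $P$-completion of $\mathcal{F}$ (and $f^\nu_\kappa(\cdot,x)$ with respect to the $P^\nu$-completion), so these expectations are defined. For functions $h^\nu:\mathbb{X}\to\overline{\mathbb{R}}$, $\liminf_{(\nu,y)\to(+\infty,x)}h^\nu(y):=\lim_{\delta\downarrow0}\lim_{N\to\infty}\inf\{h^\nu(y):\nu\ge N,\ d_{\mathbb{X}}(y,x)<\delta\}$. *)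

theory Defs
  imports "HOL-Analysis.Analysis" "HOL-Probability.Probability"
begin

text \<open>Polish spaces are represented on the carrier
  type nat => real; every Polish space has cardinality at most the continuum and so is
  homeomorphic to a topology on a subset of this type.\<close>
definition suslin_space :: "'b topology \<Rightarrow> bool" where
  "suslin_space X \<longleftrightarrow> Hausdorff_space X \<and>
     (\<exists>(Y :: (nat \<Rightarrow> real) topology) g. completely_metrizable_space Y \<and> separable_space Y \<and>
        continuous_map Y X g \<and> g ` topspace Y = topspace X)"

definition lsc :: "('b::topological_space \<Rightarrow> ereal) \<Rightarrow> bool" where
  "lsc g \<longleftrightarrow> (\<forall>a. open {x. a < g x})"

text \<open>Ereal subtraction satisfies exactly the paper's conventions:
  +inf - a = +inf (incl. inf - inf = inf) and b - inf = -inf for finite b.\<close>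
definition EE :: "'a measure \<Rightarrow> ('a \<Rightarrow> ereal) \<Rightarrow> ereal" where
  "EE \<mu> g = enn2ereal (\<integral>\<^sup>+ \<xi>. e2ennreal (max (g \<xi>) 0) \<partial>completion \<mu>)
           - enn2ereal (\<integral>\<^sup>+ \<xi>. e2ennreal (max (- g \<xi>) 0) \<partial>completion \<mu>)"

definition Efun :: "'a measure \<Rightarrow> ('a \<Rightarrow> 'b \<Rightarrow> ereal) \<Rightarrow> 'b \<Rightarrow> ereal" where
  "Efun Q h x = EE Q (\<lambda>\<xi>. h \<xi> x)"

definition envelope :: "('a \<Rightarrow> 'b::metric_space \<Rightarrow> ereal) \<Rightarrow> real \<Rightarrow> 'a \<Rightarrow> 'b \<Rightarrow> ereal" where
  "envelope f \<kappa> \<xi> x = (INF x'. f \<xi> x' + ereal \<kappa> * ereal (dist x x'))"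

text \<open>liminf_{(nu,y) -> (+inf,x)} h^nu(y) = lim_{delta->0} lim_{N->inf} inf{h^nu(y) : nu >= N, d(y,x) < delta};
  both limits are of monotone (nondecreasing) families, hence suprema.\<close>
definition joint_liminf :: "(nat \<Rightarrow> 'b::metric_space \<Rightarrow> ereal) \<Rightarrow> 'b \<Rightarrow> ereal" where
  "joint_liminf h x = (SUP \<delta>\<in>{0<..}. SUP N. INF \<nu>\<in>{N..}. INF y\<in>{y. dist y x < \<delta>}. h \<nu> y)"

end

theory Submission
  imports Defs
begin

definition pfx :: "(nat \<Rightarrow> nat) \<Rightarrow> nat \<Rightarrow> nat list" where
  "pfx \<sigma> n = map \<sigma> [0..<n]"

definition suslin :: "(nat list \<Rightarrow> 'a set) \<Rightarrow> 'a set" where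
  "suslin A = (\<Union>\<sigma>. \<Inter>n. A (pfx \<sigma> n))"

lemma pfx_Suc: "pfx \<sigma> (Suc n) = pfx \<sigma> n @ [\<sigma> n]"
  by (simp add: pfx_def)

lemma length_pfx[simp]: "length (pfx \<sigma> n) = n"
  by (simp add: pfx_def)

lemma hull_exists:
  assumes fm: "finite_measure Q" and S: "S \<subseteq> space Q"
  shows "\<exists>H\<in>sets Q. S \<subseteq> H \<and> (\<forall>H'\<in>sets Q. S \<subseteq> H' \<longrightarrow> measure Q H \<le> measure Q H')"
proof -
  interpret finite_measure Q by (rule fm)
  define V where "V = {measure Q H' | H'. H' \<in> sets Q \<and> S \<subseteq> H'}"
  define v where "v = Inf V"
  have Vne: "V \<noteq> {}" using S unfolding V_def by auto
  have bdd: "bdd_below V" unfolding V_def by (rule bdd_belowI[of _ 0]) auto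
  have "\<forall>n::nat. \<exists>H. H \<in> sets Q \<and> S \<subseteq> H \<and> measure Q H < v + 1/(Suc n)"
  proof
    fix n :: nat
    have "Inf V < v + 1/(Suc n)" unfolding v_def by simp
    from cInf_lessD[OF Vne this] show "\<exists>H. H \<in> sets Q \<and> S \<subseteq> H \<and> measure Q H < v + 1/(Suc n)"
      unfolding V_def by auto
  qed
  from choice[OF this] obtain H where H': "\<forall>n. H n \<in> sets Q \<and> S \<subseteq> H n \<and> measure Q (H n) < v + 1/(Suc n)"
    by blast
  then have H: "\<And>n. H n \<in> sets Q" "\<And>n. S \<subseteq> H n" "\<And>n. measure Q (H n) < v + 1/(Suc n)"
    by blast+
  define H0 where "H0 = (\<Inter>n. H n)"
  have H0s: "H0 \<in> sets Q" unfolding H0_def using H(1) by auto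
  have SH0: "S \<subseteq> H0" unfolding H0_def using H(2) by auto
  have H0v: "measure Q H0 \<le> v"
  proof (rule field_le_epsilon)
    fix e :: real assume e: "0 < e"
    obtain n :: nat where n: "1 / real (Suc n) < e"
      using nat_approx_posE[OF e] by blast
    have "H0 \<subseteq> H n" unfolding H0_def by blast
    then have "measure Q H0 \<le> measure Q (H n)"
      using H(1)[of n] by (rule finite_measure_mono)
    then show "measure Q H0 \<le> v + e" using H(3)[of n] n by linarith
  qed
  have vle: "v \<le> measure Q H'" if "H' \<in> sets Q" "S \<subseteq> H'" for H'
  proof -
    have "measure Q H' \<in> V" unfolding V_def using that by blast
    then show ?thesis unfolding v_def by (rule cInf_lower[OF _ bdd])
  qed
  have "\<forall>H'\<in>sets Q. S \<subseteq> H' \<longrightarrow> measure Q H0 \<le> measure Q H'"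
    using H0v vle by (meson order_trans)
  then show ?thesis using H0s SH0 by blast
qed

lemma suslin_completion:
  assumes fm: "finite_measure Q" and As: "\<And>s. A s \<in> sets Q"
  shows "suslin A \<in> sets (completion Q)"
proof -
  interpret finite_measure Q by (rule fm)
  define Ae where "Ae s = {\<xi>. \<exists>\<sigma>. pfx \<sigma> (length s) = s \<and> (\<forall>n. \<xi> \<in> A (pfx \<sigma> n))}" for s
  have Ae_sub: "Ae s \<subseteq> A s" for s
  proof
    fix \<xi> assume "\<xi> \<in> Ae s"
    then obtain \<sigma> where "pfx \<sigma> (length s) = s" "\<forall>n. \<xi> \<in> A (pfx \<sigma> n)"
      unfolding Ae_def by auto
    then show "\<xi> \<in> A s" by metis
  qed
  have Ae_sp: "Ae s \<subseteq> space Q" for s using Ae_sub[of s] sets.sets_into_space[OF As[of s]] by blast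
  have Ae_split: "Ae s \<subseteq> (\<Union>k. Ae (s @ [k]))" for s
  proof
    fix \<xi> assume "\<xi> \<in> Ae s"
    then obtain \<sigma> where s: "pfx \<sigma> (length s) = s" and a: "\<forall>n. \<xi> \<in> A (pfx \<sigma> n)"
      unfolding Ae_def by auto
    have "pfx \<sigma> (length (s @ [\<sigma> (length s)])) = s @ [\<sigma> (length s)]"
      using s by (simp add: pfx_Suc)
    then have "\<xi> \<in> Ae (s @ [\<sigma> (length s)])" using a unfolding Ae_def by blast
    then show "\<xi> \<in> (\<Union>k. Ae (s @ [k]))" by blast
  qed
  have "\<forall>s. \<exists>H\<in>sets Q. Ae s \<subseteq> H \<and> (\<forall>H'\<in>sets Q. Ae s \<subseteq> H' \<longrightarrow> measure Q H \<le> measure Q H')"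
    by (intro allI hull_exists[OF fm Ae_sp])
  then obtain H0 where H0: "\<And>s. H0 s \<in> sets Q" "\<And>s. Ae s \<subseteq> H0 s"
    "\<And>s H'. H' \<in> sets Q \<Longrightarrow> Ae s \<subseteq> H' \<Longrightarrow> measure Q (H0 s) \<le> measure Q H'"
    by metis
  define H where "H s = H0 s \<inter> A s" for s
  have Hs: "H s \<in> sets Q" for s unfolding H_def using H0(1) As by auto
  have AeH: "Ae s \<subseteq> H s" for s unfolding H_def using H0(2) Ae_sub by blast
  have HA: "H s \<subseteq> A s" for s unfolding H_def by blast
  have Hmin: "measure Q (H s) \<le> measure Q H'" if "H' \<in> sets Q" "Ae s \<subseteq> H'" for s H'
  proof -
    have "measure Q (H s) \<le> measure Q (H0 s)" unfolding H_def using H0(1) As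
      by (intro finite_measure_mono) auto
    also have "\<dots> \<le> measure Q H'" using H0(3)[OF that] .
    finally show ?thesis .
  qed
  define Z where "Z s = H s - (\<Union>k. H (s @ [k]))" for s
  have Zs: "Z s \<in> sets Q" for s unfolding Z_def using Hs by auto
  have Znull: "Z s \<in> null_sets Q" for s
  proof -
    define U where "U = (\<Union>k. H (s @ [k]))"
    have U: "U \<in> sets Q" unfolding U_def using Hs by auto
    have "Ae s \<subseteq> U"
    proof
      fix \<xi> assume "\<xi> \<in> Ae s"
      then obtain k where "\<xi> \<in> Ae (s @ [k])" using Ae_split[of s] by blast
      then show "\<xi> \<in> U" using AeH[of "s @ [k]"] unfolding U_def by blast
    qed
    then have "Ae s \<subseteq> H s \<inter> U" using AeH[of s] by blast
    then have "measure Q (H s) \<le> measure Q (H s \<inter> U)" by (rule Hmin[OF sets.Int[OF Hs U]])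
    moreover have "measure Q (H s) = measure Q (H s \<inter> U) + measure Q (H s - U)"
    proof -
      have "measure Q (H s) = measure Q ((H s \<inter> U) \<union> (H s - U))" by (simp add: Int_Diff_Un)
      also have "\<dots> = measure Q (H s \<inter> U) + measure Q (H s - U)"
        using U Hs by (intro finite_measure_Union) auto
      finally show ?thesis .
    qed
    ultimately have "measure Q (H s - U) = 0"
      using measure_nonneg[of Q "H s - U"] by linarith
    then have "H s - U \<in> null_sets Q"
      using sets.Diff[OF Hs U] by (simp add: null_sets_def emeasure_eq_measure)
    moreover have "Z s = H s - U" unfolding Z_def U_def ..
    ultimately show ?thesis by simp
  qed
  define ZZ where "ZZ = (\<Union>s. Z s)"
  have ZZnull: "ZZ \<in> null_sets Q" unfolding ZZ_def using Znull by (rule null_sets_UN)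
  have sub1: "suslin A \<subseteq> H []"
  proof -
    have "suslin A \<subseteq> Ae []" unfolding suslin_def Ae_def by (auto simp: pfx_def)
    then show ?thesis using AeH by blast
  qed
  have sub2: "H [] - ZZ \<subseteq> suslin A"
  proof
    fix \<xi> assume \<xi>: "\<xi> \<in> H [] - ZZ"
    have step: "\<exists>k. \<xi> \<in> H (s @ [k])" if "\<xi> \<in> H s" for s
      using that \<xi> unfolding ZZ_def Z_def by blast
    define ch where "ch s = (SOME k. \<xi> \<in> H (s @ [k]))" for s
    define L where "L = rec_nat [] (\<lambda>n l. l @ [ch l])"
    have L0: "L 0 = []" and LS: "L (Suc n) = L n @ [ch (L n)]" for n
      unfolding L_def by simp_all
    have inL: "\<xi> \<in> H (L n)" for n
    proof (induction n)
      case 0 then show ?case using \<xi> L0 by simp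
    next
      case (Suc n)
      have "\<exists>k. \<xi> \<in> H (L n @ [k])" using step[OF Suc.IH] .
      then show ?case unfolding LS ch_def by (rule someI_ex)
    qed
    have lenL: "length (L n) = n" for n by (induction n) (simp_all add: L0 LS)
    define \<sigma> where "\<sigma> n = L (Suc n) ! n" for n
    have "pfx \<sigma> n = L n" for n
    proof (induction n)
      case 0 then show ?case by (simp add: pfx_def L0)
    next
      case (Suc n)
      then show ?case by (simp add: pfx_Suc \<sigma>_def LS nth_append lenL)
    qed
    then have "\<forall>n. \<xi> \<in> A (pfx \<sigma> n)" using inL HA by (metis subsetD)
    then show "\<xi> \<in> suslin A" unfolding suslin_def by blast
  qed
  have "suslin A = (H [] - ZZ) \<union> (suslin A \<inter> ZZ)" using sub1 sub2 by blast
  then show ?thesis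
  proof (rule sets_completionI)
    show "suslin A \<inter> ZZ \<subseteq> ZZ" by blast
    show "ZZ \<in> null_sets Q" by (rule ZZnull)
    show "H [] - ZZ \<in> sets Q" using Hs[of "[]"] null_setsD2[OF ZZnull] by (rule sets.Diff)
  qed
qed

lemma take_pfx: "take j (pfx \<sigma> n) = pfx \<sigma> (min j n)"
  by (cases "j \<le> n") (auto simp: pfx_def take_map take_upt min_def)

lemma pfx_Suc_Cons: "pfx \<sigma> (Suc n) = \<sigma> 0 # pfx (\<lambda>i. \<sigma> (Suc i)) n"
  unfolding pfx_def by (simp add: upt_conv_Cons map_Suc_upt[symmetric] del: upt_Suc)

lemma triangle_mono: "a \<le> b \<Longrightarrow> triangle a \<le> triangle b"
  by (induction b) (auto simp: le_Suc_eq)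

lemma prod_encode_mono2: "i \<le> n \<Longrightarrow> prod_encode (k, i) \<le> prod_encode (k, n)"
  by (simp add: prod_encode_def triangle_mono)

locale SS_setup = Metric_space S d for S :: "'y set" and d +
  fixes MM :: "'a measure" and c :: "nat \<Rightarrow> 'y"
  assumes complete: "mcomplete"
    and cS: "\<And>i. c i \<in> S"
    and cdense: "\<And>y e. y \<in> S \<Longrightarrow> 0 < e \<Longrightarrow> \<exists>i. d (c i) y < e"
begin

definition SS :: "('a \<times> 'y) set set" where
  "SS = {E. \<exists>R F. (\<forall>s. R s \<in> sets MM) \<and> (\<forall>s. closedin mtopology (F s)) \<and>
            (\<forall>\<sigma>. \<forall>e>0. \<exists>n a. F (pfx \<sigma> n) \<subseteq> mcball a e) \<and>
            E = (\<Union>\<sigma>. \<Inter>n. R (pfx \<sigma> n) \<times> F (pfx \<sigma> n))}"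

lemma SSI:
  assumes "\<And>s. R s \<in> sets MM" "\<And>s. closedin mtopology (F s)"
    "\<And>\<sigma> e. e > 0 \<Longrightarrow> \<exists>n a. F (pfx \<sigma> n) \<subseteq> mcball a e"
    "E = (\<Union>\<sigma>. \<Inter>n. R (pfx \<sigma> n) \<times> F (pfx \<sigma> n))"
  shows "E \<in> SS"
  unfolding SS_def using assms by blast

lemma SSE:
  assumes "E \<in> SS"
  obtains R F where "\<And>s. R s \<in> sets MM" "\<And>s. closedin mtopology (F s)"
    "\<And>\<sigma> e. e > 0 \<Longrightarrow> \<exists>n a. F (pfx \<sigma> n) \<subseteq> mcball a e"
    "E = (\<Union>\<sigma>. \<Inter>n. R (pfx \<sigma> n) \<times> F (pfx \<sigma> n))"
  using assms unfolding SS_def by blast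

lemma SS_sub: 
  assumes "E \<in> SS" shows "E \<subseteq> space MM \<times> S"
proof -
  obtain R F where RF: "\<And>s. R s \<in> sets MM" "\<And>s. closedin mtopology (F s)"
    "E = (\<Union>\<sigma>. \<Inter>n. R (pfx \<sigma> n) \<times> F (pfx \<sigma> n))"
    and "\<And>\<sigma> e. e > 0 \<Longrightarrow> \<exists>n a. F (pfx \<sigma> n) \<subseteq> mcball a e"
    by (rule SSE[OF assms]) (rule that; assumption)
  show ?thesis
  proof
    fix p assume "p \<in> E"
    then obtain \<sigma> where "p \<in> (\<Inter>n. R (pfx \<sigma> n) \<times> F (pfx \<sigma> n))" unfolding RF(3) by blast
    then have "p \<in> R (pfx \<sigma> 0) \<times> F (pfx \<sigma> 0)" by blast
    moreover have "R (pfx \<sigma> 0) \<subseteq> space MM" using sets.sets_into_space[OF RF(1)] .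
    moreover have "F (pfx \<sigma> 0) \<subseteq> S" using closedin_subset[OF RF(2)] by simp
    ultimately show "p \<in> space MM \<times> S" by blast
  qed
qed

lemma SS_proj:
  assumes "E \<in> SS"
  shows "\<exists>A. (\<forall>s. A s \<in> sets MM) \<and> fst ` E = suslin A"
proof -
  obtain R F where Rs: "\<And>s. R s \<in> sets MM" and Fc: "\<And>s. closedin mtopology (F s)"
    and Fsm: "\<And>\<sigma> e. e > 0 \<Longrightarrow> \<exists>n a. F (pfx \<sigma> n) \<subseteq> mcball a e"
    and E: "E = (\<Union>\<sigma>. \<Inter>n. R (pfx \<sigma> n) \<times> F (pfx \<sigma> n))"
    by (rule SSE[OF assms]) (rule that; assumption)
  define A where "A s = (if (\<Inter>j\<in>{..length s}. F (take j s)) = {} then {} else R s)" for s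
  have As: "A s \<in> sets MM" for s unfolding A_def using Rs by auto
  have A_ne: "(\<Inter>j\<in>{..length s}. F (take j s)) \<noteq> {} \<and> \<xi> \<in> R s" if "\<xi> \<in> A s" for \<xi> s
    using that unfolding A_def by (simp split: if_splits)
  have tk: "(\<Inter>j\<in>{..length (pfx \<sigma> n)}. F (take j (pfx \<sigma> n))) = (\<Inter>j\<in>{..n}. F (pfx \<sigma> j))" for \<sigma> n
    by (rule INF_cong) (simp_all add: take_pfx)
  have "fst ` E = suslin A"
  proof
    show "fst ` E \<subseteq> suslin A"
    proof
      fix \<xi> assume "\<xi> \<in> fst ` E"
      then obtain y \<sigma> where a: "\<forall>n. \<xi> \<in> R (pfx \<sigma> n) \<and> y \<in> F (pfx \<sigma> n)"
        unfolding E by force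
      have "\<xi> \<in> A (pfx \<sigma> n)" for n
      proof -
        have "y \<in> (\<Inter>j\<in>{..n}. F (pfx \<sigma> j))" using a by blast
        then have "(\<Inter>j\<in>{..length (pfx \<sigma> n)}. F (take j (pfx \<sigma> n))) \<noteq> {}" unfolding tk by blast
        then show ?thesis unfolding A_def using a by simp
      qed
      then show "\<xi> \<in> suslin A" unfolding suslin_def by blast
    qed
  next
    show "suslin A \<subseteq> fst ` E"
    proof
      fix \<xi> assume "\<xi> \<in> suslin A"
      then obtain \<sigma> where a: "\<And>n. \<xi> \<in> A (pfx \<sigma> n)" unfolding suslin_def by blast
      have ne: "(\<Inter>j\<in>{..n}. F (pfx \<sigma> j)) \<noteq> {}" for n
        using A_ne[OF a[of n]] unfolding tk by blast
      have Rin: "\<xi> \<in> R (pfx \<sigma> n)" for n using A_ne[OF a[of n]] by blast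
      define CC where "CC = range (\<lambda>n. F (pfx \<sigma> n))"
      have P1: "\<forall>C\<in>CC. closedin mtopology C" unfolding CC_def using Fc by blast
      have P2: "\<forall>e>0. \<exists>C a. C \<in> CC \<and> C \<subseteq> mcball a e"
      proof (intro allI impI)
        fix e :: real assume "e > 0"
        then obtain n a where "F (pfx \<sigma> n) \<subseteq> mcball a e" using Fsm by blast
        moreover have "F (pfx \<sigma> n) \<in> CC" unfolding CC_def by simp
        ultimately show "\<exists>C a. C \<in> CC \<and> C \<subseteq> mcball a e" by blast
      qed
      have P3: "\<forall>FF. finite FF \<and> FF \<subseteq> CC \<longrightarrow> \<Inter> FF \<noteq> {}"
        proof (intro allI impI)
          fix FF assume FF: "finite FF \<and> FF \<subseteq> CC"
          then obtain J where J: "finite J" "FF = (\<lambda>n. F (pfx \<sigma> n)) ` J"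
            using finite_subset_image[of FF "\<lambda>n. F (pfx \<sigma> n)" UNIV] FF unfolding CC_def by blast
          define m where "m = Max (insert 0 J)"
          have "J \<subseteq> {..m}"
          proof
            fix j assume "j \<in> J"
            then have "j \<le> m" unfolding m_def by (intro Max_ge) (simp_all add: J(1))
            then show "j \<in> {..m}" by simp
          qed
          then have "(\<Inter>j\<in>{..m}. F (pfx \<sigma> j)) \<subseteq> \<Inter> FF" unfolding J(2) by blast
          then show "\<Inter> FF \<noteq> {}" using ne[of m] by blast
        qed
      have "(\<forall>C\<in>CC. closedin mtopology C) \<and> (\<forall>e>0. \<exists>C a. C \<in> CC \<and> C \<subseteq> mcball a e) \<and>
          (\<forall>FF. finite FF \<and> FF \<subseteq> CC \<longrightarrow> \<Inter> FF \<noteq> {}) \<longrightarrow> \<Inter> CC \<noteq> {}"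
        using complete[unfolded mcomplete_fip] by (rule spec)
      then have "\<Inter> CC \<noteq> {}" by (rule mp) (intro conjI P1 P2 P3)
      then obtain y where "y \<in> \<Inter> CC" by blast
      then have "\<forall>n. y \<in> F (pfx \<sigma> n)" unfolding CC_def by blast
      then have "(\<xi>, y) \<in> E" unfolding E using Rin by blast
      then show "\<xi> \<in> fst ` E" by force
    qed
  qed
  then show ?thesis using As by blast
qed

end

context SS_setup begin

lemma SS_rect:
  assumes A: "A \<in> sets MM" and F: "closedin mtopology F"
  shows "A \<times> F \<in> SS"
proof -
  define F' where "F' s = (if s = [] then F else F \<inter> mcball (c (last s)) ((1/2)^(length s)))" for s :: "nat list"
  have FS: "F \<subseteq> S" using closedin_subset[OF F] by simp
  show ?thesis
  proof (rule SSI[where R="\<lambda>_. A" and F=F'])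
    show "A \<in> sets MM" for s :: "nat list" by (rule A)
    show "closedin mtopology (F' s)" for s
      unfolding F'_def using F by (simp add: closedin_Int)
    show "\<exists>n a. F' (pfx \<sigma> n) \<subseteq> mcball a e" if e: "e > 0" for \<sigma> e
    proof -
      obtain n where n: "(1/2::real)^n < e" using real_arch_pow_inv[OF e, of "1/2"] by auto
      have "(1/2::real)^(Suc n) \<le> (1/2)^n" by (simp add: power_le_imp_le_exp)
      then have le: "(1/2::real)^(Suc n) \<le> e" using n by linarith
      have "F' (pfx \<sigma> (Suc n)) \<subseteq> mcball (c (\<sigma> n)) ((1/2)^(Suc n))"
        unfolding F'_def by (simp add: pfx_Suc)
      also have "\<dots> \<subseteq> mcball (c (\<sigma> n)) e" using le by (rule mcball_subset_concentric)
      finally show ?thesis by blast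
    qed
    show "A \<times> F = (\<Union>\<sigma>. \<Inter>n. A \<times> F' (pfx \<sigma> n))"
    proof
      show "(\<Union>\<sigma>. \<Inter>n. A \<times> F' (pfx \<sigma> n)) \<subseteq> A \<times> F"
      proof
        fix p assume "p \<in> (\<Union>\<sigma>. \<Inter>n. A \<times> F' (pfx \<sigma> n))"
        then obtain \<sigma> where "p \<in> (\<Inter>n. A \<times> F' (pfx \<sigma> n))" by blast
        then have "p \<in> A \<times> F' (pfx \<sigma> 0)" by blast
        then show "p \<in> A \<times> F" unfolding F'_def by (simp add: pfx_def)
      qed
    next
      show "A \<times> F \<subseteq> (\<Union>\<sigma>. \<Inter>n. A \<times> F' (pfx \<sigma> n))"
      proof
        fix p assume p: "p \<in> A \<times> F"
        then obtain \<xi> y where p': "p = (\<xi>, y)" "\<xi> \<in> A" "y \<in> F" by blast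
        have yS: "y \<in> S" using p'(3) FS by blast
        define \<sigma> where "\<sigma> i = (SOME j. d (c j) y < (1/2)^(Suc i))" for i
        have \<sigma>: "d (c (\<sigma> i)) y < (1/2)^(Suc i)" for i
        proof -
          have "\<exists>j. d (c j) y < (1/2)^(Suc i)" by (rule cdense[OF yS]) simp
          then show ?thesis unfolding \<sigma>_def by (rule someI_ex)
        qed
        have "y \<in> F' (pfx \<sigma> n)" for n
        proof (cases n)
          case 0 then show ?thesis using p'(3) unfolding F'_def by (simp add: pfx_def)
        next
          case (Suc m)
          have "y \<in> mcball (c (\<sigma> m)) ((1/2)^(Suc m))"
            using \<sigma>[of m] cS yS by (simp add: in_mcball)
          then show ?thesis using p'(3) unfolding F'_def Suc by (simp add: pfx_Suc)
        qed
        then have "p \<in> (\<Inter>n. A \<times> F' (pfx \<sigma> n))" using p' by blast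
        then show "p \<in> (\<Union>\<sigma>. \<Inter>n. A \<times> F' (pfx \<sigma> n))" by blast
      qed
    qed
  qed
qed

lemma SS_choice:
  assumes "\<And>k::nat. E k \<in> SS"
  shows "\<exists>RR FF. \<forall>k. (\<forall>s. RR k s \<in> sets MM) \<and> (\<forall>s. closedin mtopology (FF k s)) \<and>
     (\<forall>\<sigma>. \<forall>e>0. \<exists>n a. FF k (pfx \<sigma> n) \<subseteq> mcball a e) \<and>
     E k = (\<Union>\<sigma>. \<Inter>n. RR k (pfx \<sigma> n) \<times> FF k (pfx \<sigma> n))"
proof -
  have "\<forall>k. \<exists>G. (\<forall>s. fst G s \<in> sets MM) \<and> (\<forall>s. closedin mtopology (snd G s)) \<and>
     (\<forall>\<sigma>. \<forall>e>0. \<exists>n a. snd G (pfx \<sigma> n) \<subseteq> mcball a e) \<and>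
     E k = (\<Union>\<sigma>. \<Inter>n. fst G (pfx \<sigma> n) \<times> snd G (pfx \<sigma> n))"
  proof
    fix k
    obtain R F where "\<And>s. R s \<in> sets MM" "\<And>s. closedin mtopology (F s)"
      "\<And>\<sigma> e. e > 0 \<Longrightarrow> \<exists>n a. F (pfx \<sigma> n) \<subseteq> mcball a e"
      "E k = (\<Union>\<sigma>. \<Inter>n. R (pfx \<sigma> n) \<times> F (pfx \<sigma> n))"
      by (rule SSE[OF assms]) (rule that; assumption)
    then show "\<exists>G. (\<forall>s. fst G s \<in> sets MM) \<and> (\<forall>s. closedin mtopology (snd G s)) \<and>
     (\<forall>\<sigma>. \<forall>e>0. \<exists>n a. snd G (pfx \<sigma> n) \<subseteq> mcball a e) \<and>
     E k = (\<Union>\<sigma>. \<Inter>n. fst G (pfx \<sigma> n) \<times> snd G (pfx \<sigma> n))"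
      by (intro exI[of _ "(R, F)"]) simp
  qed
  from choice[OF this] obtain G where G: "\<forall>k. (\<forall>s. fst (G k) s \<in> sets MM) \<and> (\<forall>s. closedin mtopology (snd (G k) s)) \<and>
     (\<forall>\<sigma>. \<forall>e>0. \<exists>n a. snd (G k) (pfx \<sigma> n) \<subseteq> mcball a e) \<and>
     E k = (\<Union>\<sigma>. \<Inter>n. fst (G k) (pfx \<sigma> n) \<times> snd (G k) (pfx \<sigma> n))" by (elim exE) (erule that)
  show ?thesis by (rule exI[of _ "\<lambda>k. fst (G k)"], rule exI[of _ "\<lambda>k. snd (G k)"]) (rule G)
qed

lemma SS_UN:
  assumes EK: "\<And>k::nat. E k \<in> SS"
  shows "(\<Union>k. E k) \<in> SS"
proof -
  obtain RR FF where RF0: "\<forall>k. (\<forall>s. RR k s \<in> sets MM) \<and> (\<forall>s. closedin mtopology (FF k s)) \<and>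
     (\<forall>\<sigma>. \<forall>e>0. \<exists>n a. FF k (pfx \<sigma> n) \<subseteq> mcball a e) \<and>
     E k = (\<Union>\<sigma>. \<Inter>n. RR k (pfx \<sigma> n) \<times> FF k (pfx \<sigma> n))"
    using SS_choice[of E, OF EK] by (elim exE) (erule that)
  have RF: "\<And>k s. RR k s \<in> sets MM" "\<And>k s. closedin mtopology (FF k s)"
    "\<And>k \<sigma> e. e > 0 \<Longrightarrow> \<exists>n a. FF k (pfx \<sigma> n) \<subseteq> mcball a e"
    "\<And>k. E k = (\<Union>\<sigma>. \<Inter>n. RR k (pfx \<sigma> n) \<times> FF k (pfx \<sigma> n))"
    using RF0 by simp_all
  define R' where "R' s = (case s of [] \<Rightarrow> space MM | k # t \<Rightarrow> RR k t)" for s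
  define F' where "F' s = (case s of [] \<Rightarrow> S | k # t \<Rightarrow> FF k t)" for s
  have R'S: "R' (pfx \<sigma> (Suc n)) = RR (\<sigma> 0) (pfx (\<lambda>i. \<sigma> (Suc i)) n)" for \<sigma> n
    unfolding R'_def pfx_Suc_Cons by simp
  have F'S: "F' (pfx \<sigma> (Suc n)) = FF (\<sigma> 0) (pfx (\<lambda>i. \<sigma> (Suc i)) n)" for \<sigma> n
    unfolding F'_def pfx_Suc_Cons by simp
  have R'0: "R' (pfx \<sigma> 0) = space MM" and F'0: "F' (pfx \<sigma> 0) = S" for \<sigma>
    unfolding R'_def F'_def by (simp_all add: pfx_def)
  show ?thesis
  proof (rule SSI[where R=R' and F=F'])
    show "R' s \<in> sets MM" for s unfolding R'_def using RF(1) by (simp split: list.split)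
    show "closedin mtopology (F' s)" for s unfolding F'_def using RF(2)
      by (simp split: list.split add: closedin_topspace[of mtopology, simplified])
    show "\<exists>n a. F' (pfx \<sigma> n) \<subseteq> mcball a e" if e: "e > 0" for \<sigma> e
    proof -
      obtain n a where "FF (\<sigma> 0) (pfx (\<lambda>i. \<sigma> (Suc i)) n) \<subseteq> mcball a e"
        using RF(3)[OF e] by blast
      then show ?thesis unfolding F'S[symmetric] by blast
    qed
    show "(\<Union>k. E k) = (\<Union>\<sigma>. \<Inter>n. R' (pfx \<sigma> n) \<times> F' (pfx \<sigma> n))"
    proof
      show "(\<Union>k. E k) \<subseteq> (\<Union>\<sigma>. \<Inter>n. R' (pfx \<sigma> n) \<times> F' (pfx \<sigma> n))"
      proof
        fix p assume "p \<in> (\<Union>k. E k)"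
        then obtain k where pk: "p \<in> E k" by blast
        then have psp: "p \<in> space MM \<times> S" using SS_sub[OF EK[of k]] by blast
        from pk obtain \<sigma>' where s': "\<And>n. p \<in> RR k (pfx \<sigma>' n) \<times> FF k (pfx \<sigma>' n)"
          unfolding RF(4)[of k] by blast
        define \<sigma> where "\<sigma> = case_nat k \<sigma>'"
        have "p \<in> R' (pfx \<sigma> n) \<times> F' (pfx \<sigma> n)" for n
        proof (cases n)
          case 0 then show ?thesis using psp R'0 F'0 by simp
        next
          case (Suc m)
          have "(\<lambda>i. \<sigma> (Suc i)) = \<sigma>'" unfolding \<sigma>_def by simp
          moreover have "\<sigma> 0 = k" unfolding \<sigma>_def by simp
          ultimately show ?thesis unfolding Suc R'S F'S using s'[of m] by simp
        qed
        then show "p \<in> (\<Union>\<sigma>. \<Inter>n. R' (pfx \<sigma> n) \<times> F' (pfx \<sigma> n))" by blast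
      qed
    next
      show "(\<Union>\<sigma>. \<Inter>n. R' (pfx \<sigma> n) \<times> F' (pfx \<sigma> n)) \<subseteq> (\<Union>k. E k)"
      proof
        fix p assume "p \<in> (\<Union>\<sigma>. \<Inter>n. R' (pfx \<sigma> n) \<times> F' (pfx \<sigma> n))"
        then obtain \<sigma> where s: "\<And>n. p \<in> R' (pfx \<sigma> n) \<times> F' (pfx \<sigma> n)" by blast
        have "p \<in> RR (\<sigma> 0) (pfx (\<lambda>i. \<sigma> (Suc i)) n) \<times> FF (\<sigma> 0) (pfx (\<lambda>i. \<sigma> (Suc i)) n)" for n
          using s[of "Suc n"] unfolding R'S F'S .
        then have "p \<in> E (\<sigma> 0)" unfolding RF(4)[of "\<sigma> 0"] by blast
        then show "p \<in> (\<Union>k. E k)" by blast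
      qed
    qed
  qed
qed

end

definition okp :: "nat list \<Rightarrow> nat \<Rightarrow> nat \<Rightarrow> bool" where
  "okp s k n \<longleftrightarrow> (\<forall>i<n. prod_encode (k, i) < length s)"

definition subl :: "nat list \<Rightarrow> nat \<Rightarrow> nat \<Rightarrow> nat list" where
  "subl s k n = map (\<lambda>i. s ! prod_encode (k, i)) [0..<n]"

lemma okp_pfx: "okp (pfx \<tau> m) k n \<longleftrightarrow> (\<forall>i<n. prod_encode (k, i) < m)"
  unfolding okp_def by simp

lemma subl_pfx:
  assumes "okp (pfx \<tau> m) k n"
  shows "subl (pfx \<tau> m) k n = pfx (\<lambda>i. \<tau> (prod_encode (k, i))) n"
  unfolding subl_def pfx_def
proof (rule map_cong)
  fix i assume "i \<in> set [0..<n]"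
  then have "prod_encode (k, i) < m" using assms unfolding okp_pfx by simp
  then show "map \<tau> [0..<m] ! prod_encode (k, i) = \<tau> (prod_encode (k, i))" by simp
qed simp

lemma okp_big: "okp (pfx \<tau> (Suc (prod_encode (k, n)))) k n"
  unfolding okp_pfx using prod_encode_mono2[of _ n k] by (simp add: less_Suc_eq_le)

context SS_setup begin

lemma SS_INT:
  assumes EK: "\<And>k::nat. E k \<in> SS"
  shows "(\<Inter>k. E k) \<in> SS"
proof -
  have "\<exists>RR FF. \<forall>k. (\<forall>s. RR k s \<in> sets MM) \<and> (\<forall>s. closedin mtopology (FF k s)) \<and>
     (\<forall>\<sigma>. \<forall>e>0. \<exists>n a. FF k (pfx \<sigma> n) \<subseteq> mcball a e) \<and>
     E k = (\<Union>\<sigma>. \<Inter>n. RR k (pfx \<sigma> n) \<times> FF k (pfx \<sigma> n))"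
    by (rule SS_choice) (rule EK)
  then obtain RR FF where RF0: "\<forall>k. (\<forall>s. RR k s \<in> sets MM) \<and> (\<forall>s. closedin mtopology (FF k s)) \<and>
     (\<forall>\<sigma>. \<forall>e>0. \<exists>n a. FF k (pfx \<sigma> n) \<subseteq> mcball a e) \<and>
     E k = (\<Union>\<sigma>. \<Inter>n. RR k (pfx \<sigma> n) \<times> FF k (pfx \<sigma> n))"
    by (elim exE) (erule that)
  have RF: "\<And>k s. RR k s \<in> sets MM" "\<And>k s. closedin mtopology (FF k s)"
    "\<And>k \<sigma> e. e > 0 \<Longrightarrow> \<exists>n a. FF k (pfx \<sigma> n) \<subseteq> mcball a e"
    "\<And>k. E k = (\<Union>\<sigma>. \<Inter>n. RR k (pfx \<sigma> n) \<times> FF k (pfx \<sigma> n))"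
    using RF0 by simp_all
  define R' where "R' s = space MM \<inter> (\<Inter>k. \<Inter>n. if okp s k n then RR k (subl s k n) else space MM)" for s
  define F' where "F' s = S \<inter> (\<Inter>k. \<Inter>n. if okp s k n then FF k (subl s k n) else S)" for s
  have R'mem: "\<xi> \<in> R' s \<longleftrightarrow> \<xi> \<in> space MM \<and> (\<forall>k n. okp s k n \<longrightarrow> \<xi> \<in> RR k (subl s k n))" for \<xi> s
    unfolding R'_def by auto
  have F'mem: "y \<in> F' s \<longleftrightarrow> y \<in> S \<and> (\<forall>k n. okp s k n \<longrightarrow> y \<in> FF k (subl s k n))" for y s
    unfolding F'_def by auto
  show ?thesis
  proof (rule SSI[where R=R' and F=F'])
    show "R' s \<in> sets MM" for s
    proof -
      have "(\<Inter>n. if okp s k n then RR k (subl s k n) else space MM) \<in> sets MM" for k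
        by (rule sets.countable_INT) (auto simp: RF(1))
      then have "(\<Inter>k. \<Inter>n. if okp s k n then RR k (subl s k n) else space MM) \<in> sets MM"
        by (intro sets.countable_INT) auto
      then show ?thesis unfolding R'_def by (intro sets.Int sets.top)
    qed
    show "closedin mtopology (F' s)" for s
    proof -
      have c1: "closedin mtopology (if okp s k n then FF k (subl s k n) else S)" for k n
        using RF(2) closedin_topspace[of mtopology] by simp
      have "closedin mtopology (\<Inter>n. if okp s k n then FF k (subl s k n) else S)" for k
      proof (rule closedin_Inter)
        fix T assume "T \<in> range (\<lambda>n. if okp s k n then FF k (subl s k n) else S)"
        then obtain n where "T = (if okp s k n then FF k (subl s k n) else S)" by blast
        then show "closedin mtopology T" using c1[of k n] by (simp only:)
      qed blast
      then have "closedin mtopology (\<Inter>k. \<Inter>n. if okp s k n then FF k (subl s k n) else S)"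
        by (intro closedin_Inter) auto
      then show ?thesis unfolding F'_def using closedin_topspace[of mtopology]
        by (intro closedin_Int) simp_all
    qed
    show "\<exists>n a. F' (pfx \<tau> n) \<subseteq> mcball a e" if e: "e > 0" for \<tau> e
    proof -
      obtain n a where na: "FF 0 (pfx (\<lambda>i. \<tau> (prod_encode (0, i))) n) \<subseteq> mcball a e"
        using RF(3)[OF e] by blast
      define m where "m = Suc (prod_encode (0, n))"
      have ok: "okp (pfx \<tau> m) 0 n" unfolding m_def by (rule okp_big)
      have "F' (pfx \<tau> m) \<subseteq> FF 0 (subl (pfx \<tau> m) 0 n)"
      proof
        fix y assume "y \<in> F' (pfx \<tau> m)"
        then show "y \<in> FF 0 (subl (pfx \<tau> m) 0 n)" using ok unfolding F'mem by blast
      qed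
      also have "\<dots> = FF 0 (pfx (\<lambda>i. \<tau> (prod_encode (0, i))) n)" using subl_pfx[OF ok] by simp
      finally show ?thesis using na by blast
    qed
    show "(\<Inter>k. E k) = (\<Union>\<tau>. \<Inter>m. R' (pfx \<tau> m) \<times> F' (pfx \<tau> m))"
    proof
      show "(\<Inter>k. E k) \<subseteq> (\<Union>\<tau>. \<Inter>m. R' (pfx \<tau> m) \<times> F' (pfx \<tau> m))"
      proof
        fix p assume p: "p \<in> (\<Inter>k. E k)"
        obtain \<xi> y where pxy: "p = (\<xi>, y)" by (cases p)
        have psp: "\<xi> \<in> space MM" "y \<in> S" using p SS_sub[OF EK[of 0]] pxy by blast+
        have "\<forall>k. \<exists>\<sigma>. \<forall>n. \<xi> \<in> RR k (pfx \<sigma> n) \<and> y \<in> FF k (pfx \<sigma> n)"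
        proof
          fix k
          have "p \<in> E k" using p by blast
          then obtain \<sigma> where "\<And>n. p \<in> RR k (pfx \<sigma> n) \<times> FF k (pfx \<sigma> n)"
            unfolding RF(4)[of k] by blast
          then show "\<exists>\<sigma>. \<forall>n. \<xi> \<in> RR k (pfx \<sigma> n) \<and> y \<in> FF k (pfx \<sigma> n)"
            unfolding pxy by blast
        qed
        from choice[OF this] obtain \<Sigma> where \<Sigma>: "\<And>k n. \<xi> \<in> RR k (pfx (\<Sigma> k) n) \<and> y \<in> FF k (pfx (\<Sigma> k) n)"
          by blast
        define \<tau> where "\<tau> j = \<Sigma> (fst (prod_decode j)) (snd (prod_decode j))" for j
        have \<tau>k: "(\<lambda>i. \<tau> (prod_encode (k, i))) = \<Sigma> k" for k
          unfolding \<tau>_def by simp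
        have "p \<in> R' (pfx \<tau> m) \<times> F' (pfx \<tau> m)" for m
        proof -
          have "\<xi> \<in> R' (pfx \<tau> m)" unfolding R'mem
            using psp(1) \<Sigma> subl_pfx[of \<tau> m] \<tau>k by simp
          moreover have "y \<in> F' (pfx \<tau> m)" unfolding F'mem
            using psp(2) \<Sigma> subl_pfx[of \<tau> m] \<tau>k by simp
          ultimately show ?thesis using pxy by simp
        qed
        then show "p \<in> (\<Union>\<tau>. \<Inter>m. R' (pfx \<tau> m) \<times> F' (pfx \<tau> m))" by blast
      qed
    next
      show "(\<Union>\<tau>. \<Inter>m. R' (pfx \<tau> m) \<times> F' (pfx \<tau> m)) \<subseteq> (\<Inter>k. E k)"
      proof
        fix p assume "p \<in> (\<Union>\<tau>. \<Inter>m. R' (pfx \<tau> m) \<times> F' (pfx \<tau> m))"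
        then obtain \<tau> where t: "\<And>m. p \<in> R' (pfx \<tau> m) \<times> F' (pfx \<tau> m)" by blast
        obtain \<xi> y where pxy: "p = (\<xi>, y)" by (cases p)
        show "p \<in> (\<Inter>k. E k)"
        proof
          fix k
          define \<sigma> where "\<sigma> = (\<lambda>i. \<tau> (prod_encode (k, i)))"
          have "p \<in> RR k (pfx \<sigma> n) \<times> FF k (pfx \<sigma> n)" for n
          proof -
            define m where "m = Suc (prod_encode (k, n))"
            have ok: "okp (pfx \<tau> m) k n" unfolding m_def by (rule okp_big)
            have "\<xi> \<in> R' (pfx \<tau> m)" "y \<in> F' (pfx \<tau> m)" using t[of m] pxy by auto
            then have "\<xi> \<in> RR k (subl (pfx \<tau> m) k n)" "y \<in> FF k (subl (pfx \<tau> m) k n)"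
              using ok unfolding R'mem F'mem by blast+
            then show ?thesis unfolding pxy subl_pfx[OF ok] \<sigma>_def by simp
          qed
          then show "p \<in> E k" unfolding RF(4)[of k] by blast
        qed
      qed
    qed
  qed
qed

lemma SS_empty: "{} \<in> SS"
  using SS_rect[of "{}" "{}"] by simp

lemma SS_Un2:
  assumes "E1 \<in> SS" "E2 \<in> SS"
  shows "E1 \<union> E2 \<in> SS"
proof -
  have "(\<Union>k. if k = (0::nat) then E1 else E2) \<in> SS"
    by (rule SS_UN) (simp add: assms)
  moreover have "(\<Union>k. if k = (0::nat) then E1 else E2) = E1 \<union> E2"
    by (auto split: if_splits)
  ultimately show ?thesis by simp
qed

lemma SS_open:
  assumes A: "A \<in> sets MM" and U: "openin mtopology U"
  shows "A \<times> U \<in> SS"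
proof -
  define G where "G k = \<Inter> (insert S ((\<lambda>z. S - mball z (1 / Suc k)) ` (S - U)))" for k :: nat
  have Gc: "closedin mtopology (G k)" for k
    unfolding G_def
  proof (rule closedin_Inter)
    fix T assume "T \<in> insert S ((\<lambda>z. S - mball z (1 / Suc k)) ` (S - U))"
    then show "closedin mtopology T"
      using closedin_topspace[of mtopology] by (auto intro: closedin_diff)
  qed simp
  have US: "U \<subseteq> S" using openin_subset[OF U] by simp
  have "U = (\<Union>k. G k)"
  proof
    show "U \<subseteq> (\<Union>k. G k)"
    proof
      fix y assume y: "y \<in> U"
      then obtain r where r: "r > 0" "mball y r \<subseteq> U" using U unfolding openin_mtopology by blast
      obtain k :: nat where k: "1 / real (Suc k) < r" using nat_approx_posE[OF r(1)] by blast
      have "y \<in> G k"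
        unfolding G_def
      proof (rule InterI)
        fix T assume "T \<in> insert S ((\<lambda>z. S - mball z (1 / Suc k)) ` (S - U))"
        then consider "T = S" | z where "z \<in> S - U" "T = S - mball z (1 / Suc k)" by blast
        then show "y \<in> T"
        proof cases
          case 1 then show ?thesis using y US by blast
        next
          case 2
          show ?thesis
          proof (rule ccontr)
            assume "y \<notin> T"
            then have "d z y < 1 / Suc k" using 2 y US by auto
            then have "z \<in> mball y r" using 2 y US k by (auto simp: commute)
            then show False using r(2) 2 by blast
          qed
        qed
      qed
      then show "y \<in> (\<Union>k. G k)" by blast
    qed
    show "(\<Union>k. G k) \<subseteq> U"
    proof
      fix y assume "y \<in> (\<Union>k. G k)"
      then obtain k where yk: "y \<in> G k" by blast
      have yS: "y \<in> S" using yk unfolding G_def by blast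
      show "y \<in> U"
      proof (rule ccontr)
        assume "y \<notin> U"
        then have "y \<in> S - mball y (1 / Suc k)" using yk yS unfolding G_def by blast
        then show False using yS by simp
      qed
    qed
  qed
  then have "A \<times> U = (\<Union>k. A \<times> G k)" by blast
  also have "\<dots> \<in> SS" by (rule SS_UN) (rule SS_rect[OF A Gc])
  finally show ?thesis .
qed

end

context SS_setup begin

lemma SS_borel_pull:
  fixes g :: "'y \<Rightarrow> 'b::topological_space"
  assumes g: "continuous_map mtopology euclidean g" and b: "b \<in> sets (borel :: 'b measure)"
  shows "\<forall>A\<in>sets MM. A \<times> (S \<inter> g -` b) \<in> SS \<and> A \<times> (S \<inter> g -` (- b)) \<in> SS"
proof -
  have "b \<in> sigma_sets UNIV {S. open S}" using b by (simp add: sets_borel)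
  then show ?thesis
  proof (induction rule: sigma_sets.induct)
    case (Basic a)
    then have oa: "open a" by simp
    have o: "openin mtopology (S \<inter> g -` a)"
    proof -
      have "openin mtopology {x \<in> topspace mtopology. g x \<in> a}"
        using openin_continuous_map_preimage[OF g] oa by simp
      moreover have "{x \<in> topspace mtopology. g x \<in> a} = S \<inter> g -` a" by auto
      ultimately show ?thesis by simp
    qed
    have c: "closedin mtopology (S \<inter> g -` (- a))"
    proof -
      have "S \<inter> g -` (- a) = topspace mtopology - (S \<inter> g -` a)" by auto
      then show ?thesis using o by (simp add: closedin_diff)
    qed
    show ?case using SS_open[OF _ o] SS_rect[OF _ c] by blast
  next
    case Empty
    have "closedin mtopology S" using closedin_topspace[of mtopology] by simp
    then show ?case using SS_rect[of _ "{}"] SS_rect[of _ S] by simp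
  next
    case (Compl a)
    have e1: "S \<inter> g -` (UNIV - a) = S \<inter> g -` (- a)" by auto
    have e2: "S \<inter> g -` (- (UNIV - a)) = S \<inter> g -` a" by auto
    show ?case unfolding e1 e2 using Compl.IH by blast
  next
    case (Union a)
    show ?case
    proof
      fix A assume A: "A \<in> sets MM"
      have "A \<times> (S \<inter> g -` (\<Union>i. a i)) = (\<Union>i. A \<times> (S \<inter> g -` a i))" by blast
      moreover have "(\<Union>i. A \<times> (S \<inter> g -` a i)) \<in> SS"
        by (rule SS_UN) (use Union.IH A in blast)
      moreover have "A \<times> (S \<inter> g -` (- (\<Union>i. a i))) = (\<Inter>i. A \<times> (S \<inter> g -` (- a i)))" by blast
      moreover have "(\<Inter>i. A \<times> (S \<inter> g -` (- a i))) \<in> SS"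
        by (rule SS_INT) (use Union.IH A in blast)
      ultimately show "A \<times> (S \<inter> g -` (\<Union>i. a i)) \<in> SS \<and> A \<times> (S \<inter> g -` (- (\<Union>i. a i))) \<in> SS"
        by simp
    qed
  qed
qed

definition pb :: "('y \<Rightarrow> 'b) \<Rightarrow> ('a \<times> 'b) set \<Rightarrow> ('a \<times> 'y) set" where
  "pb g D = {(\<xi>, y). \<xi> \<in> space MM \<and> y \<in> S \<and> (\<xi>, g y) \<in> D}"

lemma SS_pull:
  fixes g :: "'y \<Rightarrow> 'b::topological_space"
  assumes g: "continuous_map mtopology euclidean g"
    and D: "D \<in> sets (MM \<Otimes>\<^sub>M (borel :: 'b measure))"
  shows "pb g D \<in> SS"
proof -
  define \<Omega> where "\<Omega> = space MM \<times> (UNIV :: 'b set)"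
  have "D \<in> sigma_sets \<Omega> {a \<times> b | a b. a \<in> sets MM \<and> b \<in> sets (borel :: 'b measure)}"
    using D unfolding \<Omega>_def by (simp add: sets_pair_measure)
  then have "pb g D \<in> SS \<and> pb g (\<Omega> - D) \<in> SS"
  proof (induction rule: sigma_sets.induct)
    case (Basic ab)
    then obtain a b where ab: "ab = a \<times> b" "a \<in> sets MM" "b \<in> sets (borel :: 'b measure)" by blast
    have asp: "a \<subseteq> space MM" using sets.sets_into_space[OF ab(2)] .
    have "pb g ab = a \<times> (S \<inter> g -` b)" unfolding pb_def ab(1) using asp by auto
    moreover have "pb g (\<Omega> - ab) = (space MM - a) \<times> S \<union> a \<times> (S \<inter> g -` (- b))"
      unfolding pb_def ab(1) \<Omega>_def using asp by auto
    moreover have "(space MM - a) \<times> S \<in> SS"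
      using closedin_topspace[of mtopology] ab(2) by (intro SS_rect) auto
    moreover have "a \<times> (S \<inter> g -` b) \<in> SS \<and> a \<times> (S \<inter> g -` (- b)) \<in> SS"
      using SS_borel_pull[OF g ab(3)] ab(2) by blast
    ultimately show ?case using SS_Un2 by simp
  next
    case Empty
    have "pb g {} = {}" unfolding pb_def by simp
    moreover have "pb g (\<Omega> - {}) = space MM \<times> S" unfolding pb_def \<Omega>_def by auto
    moreover have "space MM \<times> S \<in> SS"
      using closedin_topspace[of mtopology] by (intro SS_rect) auto
    ultimately show ?case using SS_empty by simp
  next
    case (Compl a)
    have "pb g (\<Omega> - (\<Omega> - a)) = pb g a" unfolding pb_def \<Omega>_def by auto
    then show ?case using Compl.IH by simp
  next
    case (Union a)
    have "pb g (\<Union>i. a i) = (\<Union>i. pb g (a i))" unfolding pb_def by auto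
    moreover have "pb g (\<Omega> - (\<Union>i. a i)) = (\<Inter>i. pb g (\<Omega> - a i))" unfolding pb_def by auto
    moreover have "(\<Union>i. pb g (a i)) \<in> SS" by (rule SS_UN) (use Union.IH in blast)
    moreover have "(\<Inter>i. pb g (\<Omega> - a i)) \<in> SS" by (rule SS_INT) (use Union.IH in blast)
    ultimately show ?case by simp
  qed
  then show ?thesis by simp
qed

end

lemma proj_measurable:
  fixes D :: "('a \<times> 'b::metric_space) set" and M Q :: "'a measure"
  assumes suslin: "suslin_space (euclidean :: 'b topology)"
    and D: "D \<in> sets (M \<Otimes>\<^sub>M borel)"
    and Q: "finite_measure Q" "sets Q = sets M"
  shows "fst ` D \<in> sets (completion Q)"
proof -
  obtain Y :: "(nat \<Rightarrow> real) topology" and g where Y: "completely_metrizable_space Y" "separable_space Y"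
    and g: "continuous_map Y euclidean g" "g ` topspace Y = (UNIV :: 'b set)"
    using suslin unfolding suslin_space_def by auto
  obtain S d where Sd: "Metric_space S d" "Metric_space.mcomplete S d" "Y = Metric_space.mtopology S d"
    using Y(1) unfolding completely_metrizable_space_def by blast
  interpret Metric_space S d by (rule Sd(1))
  obtain C where C: "countable C" "C \<subseteq> S" "mtopology closure_of C = S"
    using Y(2) unfolding separable_space_def Sd(3) by auto
  have Sne: "S \<noteq> {}" using g(2) Sd(3) by auto
  have Cne: "C \<noteq> {}" using C(3) Sne by auto
  define c where "c = from_nat_into C"
  have cS: "c i \<in> S" for i unfolding c_def using from_nat_into[OF Cne] C(2) by blast
  have cdense: "\<exists>i. d (c i) y < e" if y: "y \<in> S" and e: "0 < e" for y e
  proof -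
    have "y \<in> mtopology closure_of C" using C(3) y by simp
    then obtain z where z: "z \<in> C" "z \<in> mball y e" using e unfolding metric_closure_of by blast
    then obtain i where "c i = z" unfolding c_def using range_from_nat_into[OF Cne C(1)] by (metis rangeE)
    then show ?thesis using z(2) by (auto simp: commute)
  qed
  interpret SS_setup S d M c
    by (unfold_locales) (use Sd(2) cS cdense in auto)
  have gc: "continuous_map mtopology euclidean g" using g(1) Sd(3) by simp
  have pbSS: "pb g D \<in> SS" by (rule SS_pull[OF gc D])
  obtain A where A: "\<And>s. A s \<in> sets M" "fst ` pb g D = suslin A"
    using SS_proj[OF pbSS] by blast
  have "fst ` D = fst ` pb g D"
  proof
    show "fst ` pb g D \<subseteq> fst ` D" unfolding pb_def by force
    show "fst ` D \<subseteq> fst ` pb g D"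
    proof
      fix \<xi> assume "\<xi> \<in> fst ` D"
      then obtain x where x: "(\<xi>, x) \<in> D" by force
      have "D \<subseteq> space M \<times> UNIV"
        using sets.sets_into_space[OF D] by (simp add: space_pair_measure)
      then have \<xi>: "\<xi> \<in> space M" using x by blast
      obtain y where y: "y \<in> S" "g y = x" using g(2) Sd(3) by (metis UNIV_I imageE topspace_mtopology)
      then have "(\<xi>, y) \<in> pb g D" unfolding pb_def using x \<xi> by simp
      then show "\<xi> \<in> fst ` pb g D" by force
    qed
  qed
  also have "\<dots> = suslin A" by (rule A(2))
  also have "\<dots> \<in> sets (completion Q)"
    by (rule suslin_completion[OF Q(1)]) (simp add: Q(2) A(1))
  finally show ?thesis .
qed

lemma ereal_minus_le_iff_real: "a - ereal c \<le> b \<longleftrightarrow> a \<le> b + ereal (c::real)"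
  by (cases a; cases b) auto

lemma ereal_shift_aux:
  fixes A B A' B' :: ereal
  assumes "0 \<le> A" "0 \<le> B" "0 \<le> A'" "0 \<le> B'" "A \<le> A' + ereal c" "B' \<le> B + ereal c" "0 \<le> c"
  shows "A - B \<le> A' - B' + ereal (2*c)"
  using assms by (cases A; cases B; cases A'; cases B') auto

lemma env_le_self: "envelope f \<kappa> \<xi> x \<le> f \<xi> x"
  unfolding envelope_def by (rule INF_lower2[of x]) (simp_all add: zero_ereal_def[symmetric])

lemma env_lip:
  fixes f :: "'a \<Rightarrow> 'b::metric_space \<Rightarrow> ereal"
  assumes k: "0 \<le> \<kappa>"
  shows "envelope f \<kappa> \<xi> x \<le> envelope f \<kappa> \<xi> y + ereal (\<kappa> * dist x y)"
proof -
  have "envelope f \<kappa> \<xi> x - ereal (\<kappa> * dist x y) \<le> envelope f \<kappa> \<xi> y"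
    unfolding envelope_def
  proof (rule INF_greatest)
    fix x' :: 'b assume "x' \<in> UNIV"
    have tri: "\<kappa> * dist x x' \<le> \<kappa> * dist y x' + \<kappa> * dist x y"
      using mult_left_mono[OF dist_triangle[of x x' y] k] by (simp add: dist_commute algebra_simps)
    have "(INF x'. f \<xi> x' + ereal \<kappa> * ereal (dist x x')) \<le> f \<xi> x' + ereal \<kappa> * ereal (dist x x')"
      by (rule INF_lower) simp
    also have "\<dots> \<le> (f \<xi> x' + ereal \<kappa> * ereal (dist y x')) + ereal (\<kappa> * dist x y)"
      using tri by (cases "f \<xi> x'") auto
    finally show "(INF x'. f \<xi> x' + ereal \<kappa> * ereal (dist x x')) - ereal (\<kappa> * dist x y)
        \<le> f \<xi> x' + ereal \<kappa> * ereal (dist y x')"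
      by (simp add: ereal_minus_le_iff_real)
  qed
  then show ?thesis by (simp add: ereal_minus_le_iff_real)
qed

lemma env_mono:
  fixes f :: "'a \<Rightarrow> 'b::metric_space \<Rightarrow> ereal"
  assumes "0 \<le> \<kappa>" "\<kappa> \<le> \<kappa>'"
  shows "envelope f \<kappa> \<xi> x \<le> envelope f \<kappa>' \<xi> x"
  unfolding envelope_def
proof (rule INF_mono)
  fix x' show "\<exists>m\<in>UNIV. f \<xi> m + ereal \<kappa> * ereal (dist x m) \<le> f \<xi> x' + ereal \<kappa>' * ereal (dist x x')"
  proof (intro bexI)
    have "\<kappa> * dist x x' \<le> \<kappa>' * dist x x'" using assms by (intro mult_right_mono) auto
    then show "f \<xi> x' + ereal \<kappa> * ereal (dist x x') \<le> f \<xi> x' + ereal \<kappa>' * ereal (dist x x')"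
      by (cases "f \<xi> x'") auto
  qed simp
qed

lemma env_conv:
  fixes f :: "'a \<Rightarrow> 'b::metric_space \<Rightarrow> ereal"
  assumes lsc: "lsc (f \<xi>)" and k0: "0 \<le> \<kappa>0" and fin: "envelope f \<kappa>0 \<xi> x \<noteq> -\<infinity>"
  shows "(SUP k::nat. envelope f (\<kappa>0 + real k) \<xi> x) = f \<xi> x"
proof (rule antisym)
  show "(SUP k::nat. envelope f (\<kappa>0 + real k) \<xi> x) \<le> f \<xi> x"
    by (rule SUP_least) (rule env_le_self)
  show "f \<xi> x \<le> (SUP k::nat. envelope f (\<kappa>0 + real k) \<xi> x)"
  proof (rule dense_le)
    fix t assume t: "t < f \<xi> x"
    have "open {z. t < f \<xi> z}" using lsc unfolding lsc_def by blast
    moreover have "x \<in> {z. t < f \<xi> z}" using t by simp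
    ultimately obtain r where r: "r > 0" "ball x r \<subseteq> {z. t < f \<xi> z}"
      using open_contains_ball by blast
    define m where "m = envelope f \<kappa>0 \<xi> x"
    have "\<exists>k::nat. t \<le> m + ereal (real k * r)"
    proof (cases "t = -\<infinity> \<or> m = \<infinity>")
      case True then show ?thesis by auto
    next
      case False
      then obtain tr mr where tm: "t = ereal tr" "m = ereal mr"
        using fin t False unfolding m_def by (cases t; cases "envelope f \<kappa>0 \<xi> x") auto
      obtain k :: nat where "(tr - mr) / r \<le> real k" using real_arch_simple by blast
      then have "tr - mr \<le> real k * r" using r(1) by (simp add: divide_le_eq)
      then show ?thesis using tm by (intro exI[of _ k]) simp
    qed
    then obtain k :: nat where k: "t \<le> m + ereal (real k * r)" by blast
    have "t \<le> envelope f (\<kappa>0 + real k) \<xi> x"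
      unfolding envelope_def
    proof (rule INF_greatest)
      fix x' :: 'b assume "x' \<in> UNIV"
      show "t \<le> f \<xi> x' + ereal (\<kappa>0 + real k) * ereal (dist x x')"
      proof (cases "dist x x' < r")
        case True
        then have "t < f \<xi> x'" using r(2) by (auto simp: dist_commute)
        moreover have "f \<xi> x' \<le> f \<xi> x' + ereal (\<kappa>0 + real k) * ereal (dist x x')"
          using k0 by (cases "f \<xi> x'") auto
        ultimately show ?thesis by simp
      next
        case False
        have "m \<le> f \<xi> x' + ereal \<kappa>0 * ereal (dist x x')"
          unfolding m_def envelope_def by (rule INF_lower) simp
        moreover have "real k * r \<le> real k * dist x x'" using False by (intro mult_left_mono) auto
        ultimately have "m + ereal (real k * r) \<le> (f \<xi> x' + ereal \<kappa>0 * ereal (dist x x')) + ereal (real k * dist x x')"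
          by (intro add_mono) auto
        also have "\<dots> = f \<xi> x' + ereal (\<kappa>0 + real k) * ereal (dist x x')"
          by (cases "f \<xi> x'") (auto simp: algebra_simps)
        finally show ?thesis using k by simp
      qed
    qed
    also have "\<dots> \<le> (SUP k::nat. envelope f (\<kappa>0 + real k) \<xi> x)"
      by (rule SUP_upper) simp
    finally show "t \<le> (SUP k::nat. envelope f (\<kappa>0 + real k) \<xi> x)" .
  qed
qed

lemma envelope_meas:
  fixes h :: "'a \<Rightarrow> 'b::metric_space \<Rightarrow> ereal"
  assumes suslin: "suslin_space (euclidean :: 'b topology)"
    and hm: "(\<lambda>(\<xi>, x). h \<xi> x) \<in> borel_measurable (M \<Otimes>\<^sub>M borel)"
    and Q: "finite_measure Q" "sets Q = sets M"
  shows "(\<lambda>\<xi>. envelope h \<kappa> \<xi> x) \<in> borel_measurable (completion Q)"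
proof (rule borel_measurableI_less)
  fix a :: ereal
  define H where "H = (\<lambda>p::'a \<times> 'b. h (fst p) (snd p) + ereal \<kappa> * ereal (dist x (snd p)))"
  have Hm: "H \<in> borel_measurable (M \<Otimes>\<^sub>M borel)"
  proof -
    have h1: "(\<lambda>p::'a \<times> 'b. h (fst p) (snd p)) \<in> borel_measurable (M \<Otimes>\<^sub>M borel)"
      using hm by (simp add: case_prod_beta')
    have hd: "(\<lambda>p::'a \<times> 'b. dist x (snd p)) \<in> borel_measurable (M \<Otimes>\<^sub>M borel)"
    proof -
      have "(\<lambda>z::'b. dist x z) \<in> borel_measurable borel"
        by (intro borel_measurable_continuous_onI continuous_intros)
      then show ?thesis using measurable_snd by (rule measurable_compose[rotated])
    qed
    have h2: "(\<lambda>p::'a \<times> 'b. ereal \<kappa> * ereal (dist x (snd p))) \<in> borel_measurable (M \<Otimes>\<^sub>M borel)"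
      using hd by measurable
    show ?thesis unfolding H_def using h1 h2 by measurable
  qed
  define D where "D = {p \<in> space (M \<Otimes>\<^sub>M borel). H p < a}"
  have D: "D \<in> sets (M \<Otimes>\<^sub>M borel)" unfolding D_def using Hm by measurable
  have spQ: "space Q = space M" using Q(2) by (rule sets_eq_imp_space_eq)
  have "{\<xi> \<in> space (completion Q). envelope h \<kappa> \<xi> x < a} = fst ` D"
  proof
    show "{\<xi> \<in> space (completion Q). envelope h \<kappa> \<xi> x < a} \<subseteq> fst ` D"
    proof
      fix \<xi> assume "\<xi> \<in> {\<xi> \<in> space (completion Q). envelope h \<kappa> \<xi> x < a}"
      then have \<xi>: "\<xi> \<in> space M" "(INF x'. h \<xi> x' + ereal \<kappa> * ereal (dist x x')) < a"
        using spQ unfolding envelope_def by auto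
      then obtain x' where "h \<xi> x' + ereal \<kappa> * ereal (dist x x') < a"
        by (auto simp: INF_less_iff)
      then have "(\<xi>, x') \<in> D" unfolding D_def H_def using \<xi>(1) by (simp add: space_pair_measure)
      then show "\<xi> \<in> fst ` D" by force
    qed
    show "fst ` D \<subseteq> {\<xi> \<in> space (completion Q). envelope h \<kappa> \<xi> x < a}"
    proof
      fix \<xi> assume "\<xi> \<in> fst ` D"
      then obtain x' where "(\<xi>, x') \<in> D" by force
      then have \<xi>: "\<xi> \<in> space M" "h \<xi> x' + ereal \<kappa> * ereal (dist x x') < a"
        unfolding D_def H_def by (auto simp: space_pair_measure)
      have "envelope h \<kappa> \<xi> x \<le> h \<xi> x' + ereal \<kappa> * ereal (dist x x')"
        unfolding envelope_def by (rule INF_lower) simp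
      then show "\<xi> \<in> {\<xi> \<in> space (completion Q). envelope h \<kappa> \<xi> x < a}"
        using \<xi> spQ by auto
    qed
  qed
  also have "\<dots> \<in> sets (completion Q)" by (rule proj_measurable[OF suslin D Q])
  finally show "{\<xi> \<in> space (completion Q). envelope h \<kappa> \<xi> x < a} \<in> sets (completion Q)" .
qed

lemma EE_mono:
  assumes "\<And>\<xi>. g \<xi> \<le> h \<xi>"
  shows "EE Q g \<le> EE Q h"
  unfolding EE_def
proof (rule ereal_minus_mono)
  have "(\<integral>\<^sup>+ \<xi>. e2ennreal (max (g \<xi>) 0) \<partial>completion Q) \<le> (\<integral>\<^sup>+ \<xi>. e2ennreal (max (h \<xi>) 0) \<partial>completion Q)"
    by (intro nn_integral_mono e2ennreal_mono max.mono assms order_refl)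
  then show "enn2ereal (\<integral>\<^sup>+ \<xi>. e2ennreal (max (g \<xi>) 0) \<partial>completion Q)
      \<le> enn2ereal (\<integral>\<^sup>+ \<xi>. e2ennreal (max (h \<xi>) 0) \<partial>completion Q)"
    by (simp add: less_eq_ennreal.rep_eq)
  have "(\<integral>\<^sup>+ \<xi>. e2ennreal (max (- h \<xi>) 0) \<partial>completion Q) \<le> (\<integral>\<^sup>+ \<xi>. e2ennreal (max (- g \<xi>) 0) \<partial>completion Q)"
    by (intro nn_integral_mono e2ennreal_mono max.mono) (simp_all add: assms)
  then show "enn2ereal (\<integral>\<^sup>+ \<xi>. e2ennreal (max (- h \<xi>) 0) \<partial>completion Q)
      \<le> enn2ereal (\<integral>\<^sup>+ \<xi>. e2ennreal (max (- g \<xi>) 0) \<partial>completion Q)"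
    by (simp add: less_eq_ennreal.rep_eq)
qed

lemma nn_shift:
  assumes Q: "prob_space Q" and um: "u \<in> borel_measurable (completion Q)"
    and le: "\<And>\<xi>. v \<xi> \<le> u \<xi> + ereal c" and c: "0 \<le> c"
  shows "(\<integral>\<^sup>+ \<xi>. e2ennreal (max (v \<xi>) 0) \<partial>completion Q) \<le> (\<integral>\<^sup>+ \<xi>. e2ennreal (max (u \<xi>) 0) \<partial>completion Q) + ennreal c"
proof -
  have pt: "e2ennreal (max (v \<xi>) 0) \<le> e2ennreal (max (u \<xi>) 0) + ennreal c" for \<xi>
  proof -
    have "max (v \<xi>) 0 \<le> max (u \<xi>) 0 + ereal c" using le[of \<xi>] c by (cases "v \<xi>"; cases "u \<xi>") (auto simp: max_def)
    then have "enn2ereal (e2ennreal (max (v \<xi>) 0)) \<le> enn2ereal (e2ennreal (max (u \<xi>) 0)) + enn2ereal (ennreal c)"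
      using c by (simp add: enn2ereal_e2ennreal)
    then show ?thesis by (simp add: less_eq_ennreal.rep_eq plus_ennreal.rep_eq)
  qed
  have sp: "emeasure (completion Q) (space (completion Q)) = 1"
    using prob_space.emeasure_space_1[OF Q] by simp
  have "(\<integral>\<^sup>+ \<xi>. e2ennreal (max (v \<xi>) 0) \<partial>completion Q) \<le> (\<integral>\<^sup>+ \<xi>. e2ennreal (max (u \<xi>) 0) + ennreal c \<partial>completion Q)"
    by (intro nn_integral_mono pt)
  also have "\<dots> = (\<integral>\<^sup>+ \<xi>. e2ennreal (max (u \<xi>) 0) \<partial>completion Q) + (\<integral>\<^sup>+ \<xi>. ennreal c \<partial>completion Q)"
  proof (rule nn_integral_add)
    show "(\<lambda>\<xi>. e2ennreal (max (u \<xi>) 0)) \<in> borel_measurable (completion Q)" using um by measurable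
    show "(\<lambda>\<xi>. ennreal c) \<in> borel_measurable (completion Q)" by (rule measurable_const) simp
  qed
  also have "(\<integral>\<^sup>+ \<xi>. ennreal c \<partial>completion Q) = ennreal c" using sp by simp
  finally show ?thesis .
qed

lemma EE_shift:
  assumes Q: "prob_space Q" and gm: "g \<in> borel_measurable (completion Q)"
    and hm: "h \<in> borel_measurable (completion Q)"
    and le: "\<And>\<xi>. g \<xi> \<le> h \<xi> + ereal c" and c: "0 \<le> c"
  shows "EE Q g \<le> EE Q h + ereal (2 * c)"
proof -
  define A where "A = enn2ereal (\<integral>\<^sup>+ \<xi>. e2ennreal (max (g \<xi>) 0) \<partial>completion Q)"
  define B where "B = enn2ereal (\<integral>\<^sup>+ \<xi>. e2ennreal (max (- g \<xi>) 0) \<partial>completion Q)"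
  define A' where "A' = enn2ereal (\<integral>\<^sup>+ \<xi>. e2ennreal (max (h \<xi>) 0) \<partial>completion Q)"
  define B' where "B' = enn2ereal (\<integral>\<^sup>+ \<xi>. e2ennreal (max (- h \<xi>) 0) \<partial>completion Q)"
  have "(\<integral>\<^sup>+ \<xi>. e2ennreal (max (g \<xi>) 0) \<partial>completion Q) \<le> (\<integral>\<^sup>+ \<xi>. e2ennreal (max (h \<xi>) 0) \<partial>completion Q) + ennreal c"
    by (rule nn_shift[OF Q hm le c])
  then have 1: "A \<le> A' + ereal c" unfolding A_def A'_def using c
    by (simp add: less_eq_ennreal.rep_eq plus_ennreal.rep_eq)
  have le2: "- h \<xi> \<le> - g \<xi> + ereal c" for \<xi>
    using le[of \<xi>] by (cases "g \<xi>"; cases "h \<xi>") auto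
  have gm': "(\<lambda>\<xi>. - g \<xi>) \<in> borel_measurable (completion Q)" using gm by measurable
  have "(\<integral>\<^sup>+ \<xi>. e2ennreal (max (- h \<xi>) 0) \<partial>completion Q) \<le> (\<integral>\<^sup>+ \<xi>. e2ennreal (max (- g \<xi>) 0) \<partial>completion Q) + ennreal c"
    by (rule nn_shift[OF Q gm' le2 c])
  then have 2: "B' \<le> B + ereal c" unfolding B_def B'_def using c
    by (simp add: less_eq_ennreal.rep_eq plus_ennreal.rep_eq)
  have "A - B \<le> A' - B' + ereal (2 * c)"
    by (rule ereal_shift_aux[OF _ _ _ _ 1 2 c]) (simp_all add: A_def B_def A'_def B'_def)
  then show ?thesis unfolding EE_def A_def B_def A'_def B'_def .
qed

theorem lemma3p1:
  fixes M :: "'a measure" and P :: "'a measure" and Pn :: "nat \<Rightarrow> 'a measure"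
    and f :: "'a \<Rightarrow> 'b::metric_space \<Rightarrow> ereal" and fn :: "nat \<Rightarrow> 'a \<Rightarrow> 'b \<Rightarrow> ereal"
  assumes suslin: "suslin_space (euclidean :: 'b topology)"
    and P_prob: "prob_space P" and P_sets: "sets P = sets M"
    and Pn_prob: "\<And>\<nu>. prob_space (Pn \<nu>)" and Pn_sets: "\<And>\<nu>. sets (Pn \<nu>) = sets M"
    and f_meas: "(\<lambda>(\<xi>, x). f \<xi> x) \<in> borel_measurable (M \<Otimes>\<^sub>M borel)"
    and fn_meas: "\<And>\<nu>. (\<lambda>(\<xi>, x). fn \<nu> \<xi> x) \<in> borel_measurable (M \<Otimes>\<^sub>M borel)"
    and f_lsc: "AE \<xi> in P. lsc (f \<xi>)"
    and ii: "\<exists>X0 :: 'b set. \<exists>\<kappa>0 :: nat. countable X0 \<and> closure X0 = UNIV \<and>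
              (\<forall>x0\<in>X0. \<forall>\<kappa>::real. \<kappa> \<ge> real \<kappa>0 \<longrightarrow>
                 liminf (\<lambda>\<nu>. Efun (Pn \<nu>) (envelope (fn \<nu>) \<kappa>) x0) \<ge> Efun P (envelope f \<kappa>) x0
                 \<and> Efun P (envelope f \<kappa>) x0 > -\<infinity>)"
  shows "(\<forall>x. joint_liminf (\<lambda>\<nu> y. Efun (Pn \<nu>) (fn \<nu>) y) x \<ge> Efun P f x)
       \<and> ((\<exists>xt. joint_liminf (\<lambda>\<nu> y. Efun (Pn \<nu>) (fn \<nu>) y) xt < \<infinity>)
            \<longrightarrow> (\<forall>x. Efun P f x > -\<infinity>))"
proof -
  obtain X0 :: "'b set" and \<kappa>0 :: nat where H: "countable X0 \<and> closure X0 = UNIV \<and>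
              (\<forall>x0\<in>X0. \<forall>\<kappa>::real. \<kappa> \<ge> real \<kappa>0 \<longrightarrow>
                 liminf (\<lambda>\<nu>. Efun (Pn \<nu>) (envelope (fn \<nu>) \<kappa>) x0) \<ge> Efun P (envelope f \<kappa>) x0
                 \<and> Efun P (envelope f \<kappa>) x0 > -\<infinity>)"
    using ii by (elim exE) (erule that)
  have X0d: "closure X0 = UNIV" using H by simp
  have hyp: "\<forall>x0\<in>X0. \<forall>\<kappa>::real. \<kappa> \<ge> real \<kappa>0 \<longrightarrow>
                 liminf (\<lambda>\<nu>. Efun (Pn \<nu>) (envelope (fn \<nu>) \<kappa>) x0) \<ge> Efun P (envelope f \<kappa>) x0
                 \<and> Efun P (envelope f \<kappa>) x0 > -\<infinity>" using H by simp
  have hyp1: "Efun P (envelope f \<kappa>) x0 \<le> liminf (\<lambda>\<nu>. Efun (Pn \<nu>) (envelope (fn \<nu>) \<kappa>) x0)"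
    and hyp2: "Efun P (envelope f \<kappa>) x0 > -\<infinity>" if "x0 \<in> X0" "real \<kappa>0 \<le> \<kappa>" for x0 \<kappa>
    using mp[OF spec[OF bspec[OF hyp that(1)], of \<kappa>] that(2)] by simp_all
  have approx: "\<exists>x0\<in>X0. dist x0 x < e" if "0 < e" for x e
  proof -
    have "x \<in> closure X0" using X0d by simp
    then show ?thesis using that unfolding closure_approachable by blast
  qed
  have Pfin: "finite_measure P" using P_prob unfolding prob_space_def by simp
  have Pnfin: "finite_measure (Pn \<nu>)" for \<nu> using Pn_prob[of \<nu>] unfolding prob_space_def by simp
  have envP: "(\<lambda>\<xi>. envelope f \<kappa> \<xi> x) \<in> borel_measurable (completion P)" for \<kappa> x
    by (rule envelope_meas[OF suslin f_meas Pfin P_sets])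
  have envPn: "(\<lambda>\<xi>. envelope (fn \<nu>) \<kappa> \<xi> x) \<in> borel_measurable (completion (Pn \<nu>))" for \<nu> \<kappa> x
    by (rule envelope_meas[OF suslin fn_meas Pnfin Pn_sets])
  have EPlip: "Efun P (envelope f \<kappa>) x \<le> Efun P (envelope f \<kappa>) y + ereal (2 * (\<kappa> * dist x y))"
    if "0 \<le> \<kappa>" for \<kappa> x y
    unfolding Efun_def by (rule EE_shift[OF P_prob envP envP env_lip[OF that]]) (simp add: that)
  have EPnlip: "Efun (Pn \<nu>) (envelope (fn \<nu>) \<kappa>) x \<le> Efun (Pn \<nu>) (envelope (fn \<nu>) \<kappa>) y + ereal (2 * (\<kappa> * dist x y))"
    if "0 \<le> \<kappa>" for \<nu> \<kappa> x y
    unfolding Efun_def by (rule EE_shift[OF Pn_prob envPn envPn env_lip[OF that]]) (simp add: that)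
  have EPnmono: "Efun (Pn \<nu>) (envelope (fn \<nu>) \<kappa>) y \<le> Efun (Pn \<nu>) (fn \<nu>) y" for \<nu> \<kappa> y
    unfolding Efun_def by (rule EE_mono) (rule env_le_self)
  have EPmono: "Efun P (envelope f \<kappa>) y \<le> Efun P f y" for \<kappa> y
    unfolding Efun_def by (rule EE_mono) (rule env_le_self)
  define J where "J x = joint_liminf (\<lambda>\<nu> y. Efun (Pn \<nu>) (fn \<nu>) y) x" for x

  have stepA: "Efun P (envelope f \<kappa>) x \<le> J x" if \<kappa>: "real \<kappa>0 \<le> \<kappa>" for \<kappa> x
  proof (rule ereal_le_epsilon2)
    fix e :: real assume e: "0 < e"
    have k0: "0 \<le> \<kappa>" using \<kappa> of_nat_0_le_iff order_trans by blast
    define \<eta> where "\<eta> = e / (6 * \<kappa> + 1)"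
    have den: "0 < 6 * \<kappa> + 1" using k0 by simp
    have \<eta>: "0 < \<eta>" using e den by (simp add: \<eta>_def)
    have \<eta>e: "6 * (\<kappa> * \<eta>) + \<eta> = e"
    proof -
      have "(6 * \<kappa> + 1) * \<eta> = e" using den by (simp add: \<eta>_def)
      then show ?thesis by (simp add: algebra_simps)
    qed
    obtain x0 where x0: "x0 \<in> X0" "dist x0 x < \<eta>" using approx[OF \<eta>] by blast
    define c where "c = 2 * (\<kappa> * (\<eta> + dist x0 x))"
    have key: "Efun (Pn \<nu>) (envelope (fn \<nu>) \<kappa>) x0 \<le> Efun (Pn \<nu>) (fn \<nu>) y + ereal c"
      if y: "dist y x < \<eta>" for \<nu> y
    proof -
      have "Efun (Pn \<nu>) (envelope (fn \<nu>) \<kappa>) x0 \<le> Efun (Pn \<nu>) (envelope (fn \<nu>) \<kappa>) y + ereal (2 * (\<kappa> * dist x0 y))"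
        by (rule EPnlip[OF k0])
      also have "\<dots> \<le> Efun (Pn \<nu>) (fn \<nu>) y + ereal (2 * (\<kappa> * dist x0 y))"
        using EPnmono by (rule add_right_mono)
      also have "\<dots> \<le> Efun (Pn \<nu>) (fn \<nu>) y + ereal c"
      proof -
        have "dist x0 y \<le> dist x0 x + dist y x" by (rule dist_triangle2)
        then have "dist x0 y \<le> \<eta> + dist x0 x" using y by simp
        then have "\<kappa> * dist x0 y \<le> \<kappa> * (\<eta> + dist x0 x)" using k0 by (rule mult_left_mono)
        then have "2 * (\<kappa> * dist x0 y) \<le> c" unfolding c_def by simp
        then show ?thesis by (intro add_left_mono) simp
      qed
      finally show ?thesis .
    qed
    define I where "I N = (INF \<nu>\<in>{N..}. INF y\<in>{y. dist y x < \<eta>}. Efun (Pn \<nu>) (fn \<nu>) y)" for N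
    have aN: "(INF \<nu>\<in>{N..}. Efun (Pn \<nu>) (envelope (fn \<nu>) \<kappa>) x0) \<le> I N + ereal c" for N
    proof -
      have "(INF \<nu>\<in>{N..}. Efun (Pn \<nu>) (envelope (fn \<nu>) \<kappa>) x0) - ereal c \<le> I N"
        unfolding I_def
      proof (intro INF_greatest)
        fix \<nu> y assume \<nu>: "\<nu> \<in> {N..}" and y: "y \<in> {y. dist y x < \<eta>}"
        have "(INF \<nu>\<in>{N..}. Efun (Pn \<nu>) (envelope (fn \<nu>) \<kappa>) x0) \<le> Efun (Pn \<nu>) (envelope (fn \<nu>) \<kappa>) x0"
          using \<nu> by (rule INF_lower)
        also have "\<dots> \<le> Efun (Pn \<nu>) (fn \<nu>) y + ereal c" using key y by simp
        finally show "(INF \<nu>\<in>{N..}. Efun (Pn \<nu>) (envelope (fn \<nu>) \<kappa>) x0) - ereal c \<le> Efun (Pn \<nu>) (fn \<nu>) y"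
          by (simp add: ereal_minus_le_iff_real)
      qed
      then show ?thesis by (simp add: ereal_minus_le_iff_real)
    qed
    have IJ: "(SUP N. I N) \<le> J x"
      unfolding J_def joint_liminf_def I_def by (rule SUP_upper2[of \<eta>]) (use \<eta> in auto)
    have h3: "liminf (\<lambda>\<nu>. Efun (Pn \<nu>) (envelope (fn \<nu>) \<kappa>) x0) \<le> J x + ereal c"
      unfolding liminf_SUP_INF
    proof (rule SUP_least)
      fix N
      have "(INF \<nu>\<in>{N..}. Efun (Pn \<nu>) (envelope (fn \<nu>) \<kappa>) x0) \<le> I N + ereal c" by (rule aN)
      also have "\<dots> \<le> (SUP N. I N) + ereal c" by (intro add_right_mono SUP_upper) simp
      also have "\<dots> \<le> J x + ereal c" using IJ by (rule add_right_mono)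
      finally show "(INF \<nu>\<in>{N..}. Efun (Pn \<nu>) (envelope (fn \<nu>) \<kappa>) x0) \<le> J x + ereal c" .
    qed
    have h2: "Efun P (envelope f \<kappa>) x0 \<le> liminf (\<lambda>\<nu>. Efun (Pn \<nu>) (envelope (fn \<nu>) \<kappa>) x0)"
      by (rule hyp1[OF x0(1) \<kappa>])
    have h1: "Efun P (envelope f \<kappa>) x \<le> Efun P (envelope f \<kappa>) x0 + ereal (2 * (\<kappa> * dist x x0))"
      by (rule EPlip[OF k0])
    have arith: "c + 2 * (\<kappa> * dist x x0) \<le> e"
    proof -
      have "\<kappa> * dist x0 x \<le> \<kappa> * \<eta>" using x0(2) k0 by (intro mult_left_mono) auto
      moreover have "c + 2 * (\<kappa> * dist x x0) = 2 * (\<kappa> * \<eta>) + 4 * (\<kappa> * dist x0 x)"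
        unfolding c_def by (simp add: dist_commute algebra_simps)
      ultimately show ?thesis using \<eta>e \<eta> by linarith
    qed
    have "Efun P (envelope f \<kappa>) x \<le> Efun P (envelope f \<kappa>) x0 + ereal (2 * (\<kappa> * dist x x0))" by (rule h1)
    also have "\<dots> \<le> liminf (\<lambda>\<nu>. Efun (Pn \<nu>) (envelope (fn \<nu>) \<kappa>) x0) + ereal (2 * (\<kappa> * dist x x0))"
      using h2 by (rule add_right_mono)
    also have "\<dots> \<le> (J x + ereal c) + ereal (2 * (\<kappa> * dist x x0))"
      using h3 by (rule add_right_mono)
    also have "\<dots> = J x + ereal (c + 2 * (\<kappa> * dist x x0))" by (cases "J x") simp_all
    also have "\<dots> \<le> J x + ereal e" using arith by (intro add_left_mono) simp
    finally show "Efun P (envelope f \<kappa>) x \<le> J x + ereal e" .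
  qed

  obtain x0 where x0: "x0 \<in> X0" using approx[of 1 undefined] by auto
  have hx0: "Efun P (envelope f (real \<kappa>0)) x0 > -\<infinity>" by (rule hyp2[OF x0]) simp

  have part2: "Efun P f x > -\<infinity>" for x
  proof -
    have "Efun P (envelope f (real \<kappa>0)) x0 \<le> Efun P (envelope f (real \<kappa>0)) x + ereal (2 * (real \<kappa>0 * dist x0 x))"
      by (rule EPlip) simp
    moreover have "Efun P (envelope f (real \<kappa>0)) x \<le> Efun P f x" by (rule EPmono)
    ultimately show ?thesis using hx0 by (cases "Efun P f x"; cases "Efun P (envelope f (real \<kappa>0)) x") auto
  qed

  have part1: "Efun P f x \<le> J x" for x
  proof -
    define gk where "gk k \<xi> = envelope f (real \<kappa>0 + real k) \<xi> x" for k \<xi>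
    define pk where "pk k = (\<integral>\<^sup>+ \<xi>. e2ennreal (max (gk k \<xi>) 0) \<partial>completion P)" for k
    define nk where "nk k = (\<integral>\<^sup>+ \<xi>. e2ennreal (max (- gk k \<xi>) 0) \<partial>completion P)" for k
    have gkm: "gk k \<in> borel_measurable (completion P)" for k unfolding gk_def by (rule envP)
    have EPk: "Efun P (envelope f (real \<kappa>0 + real k)) x = enn2ereal (pk k) - enn2ereal (nk k)" for k
      unfolding Efun_def EE_def pk_def nk_def gk_def ..
    have stepk: "enn2ereal (pk k) - enn2ereal (nk k) \<le> J x" for k
      using stepA[of "real \<kappa>0 + real k" x] EPk[of k] by simp
    have gmono: "gk k \<xi> \<le> gk (Suc k) \<xi>" for k \<xi>
      unfolding gk_def by (rule env_mono) simp_all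
    have g0: "gk 0 \<xi> = envelope f (real \<kappa>0) \<xi> x" for \<xi> unfolding gk_def by simp
    define n0 where "n0 = (\<integral>\<^sup>+ \<xi>. e2ennreal (max (- envelope f (real \<kappa>0) \<xi> x0) 0) \<partial>completion P)"
    define p0 where "p0 = (\<integral>\<^sup>+ \<xi>. e2ennreal (max (envelope f (real \<kappa>0) \<xi> x0) 0) \<partial>completion P)"
    have E0: "Efun P (envelope f (real \<kappa>0)) x0 = enn2ereal p0 - enn2ereal n0"
      unfolding Efun_def EE_def p0_def n0_def ..
    show ?thesis
    proof (cases "n0 = top")
      case True
      have "p0 = top"
      proof (rule ccontr)
        assume "p0 \<noteq> top"
        then have "enn2ereal p0 \<noteq> \<infinity>" by simp
        moreover have "enn2ereal p0 \<ge> 0" by simp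
        ultimately have "enn2ereal p0 - enn2ereal n0 = -\<infinity>" using True by (cases "enn2ereal p0") auto
        then show False using hx0 E0 by simp
      qed
      then have "Efun P (envelope f (real \<kappa>0)) x0 = \<infinity>" using E0 True by simp
      moreover have "Efun P (envelope f (real \<kappa>0)) x0 \<le> Efun P (envelope f (real \<kappa>0)) x + ereal (2 * (real \<kappa>0 * dist x0 x))"
        by (rule EPlip) simp
      ultimately have "Efun P (envelope f (real \<kappa>0)) x = \<infinity>"
        by (cases "Efun P (envelope f (real \<kappa>0)) x") auto
      moreover have "Efun P (envelope f (real \<kappa>0)) x \<le> J x" by (rule stepA) simp
      ultimately have "J x = \<infinity>" by simp
      then show ?thesis by simp
    next
      case False
      have le0: "- gk 0 \<xi> \<le> - envelope f (real \<kappa>0) \<xi> x0 + ereal (real \<kappa>0 * dist x0 x)" for \<xi>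
      proof -
        have "envelope f (real \<kappa>0) \<xi> x0 \<le> envelope f (real \<kappa>0) \<xi> x + ereal (real \<kappa>0 * dist x0 x)"
          by (rule env_lip) simp
        then show ?thesis unfolding g0
          by (cases "envelope f (real \<kappa>0) \<xi> x0"; cases "envelope f (real \<kappa>0) \<xi> x") auto
      qed
      have um: "(\<lambda>\<xi>. - envelope f (real \<kappa>0) \<xi> x0) \<in> borel_measurable (completion P)"
        using envP by measurable
      have "nk 0 \<le> n0 + ennreal (real \<kappa>0 * dist x0 x)"
        unfolding nk_def n0_def by (rule nn_shift[OF P_prob um le0]) simp
      also have "\<dots> < top" using False by (simp add: top.not_eq_extremum)
      finally have nk0: "nk 0 < top" .
      have nkm: "(\<lambda>\<xi>. e2ennreal (max (- gk k \<xi>) 0)) \<in> borel_measurable (completion P)" for k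
        using gkm[of k] by measurable
      have pkm: "(\<lambda>\<xi>. e2ennreal (max (gk k \<xi>) 0)) \<in> borel_measurable (completion P)" for k
        using gkm[of k] by measurable
      have "AE \<xi> in completion P. e2ennreal (max (- gk 0 \<xi>) 0) \<noteq> \<infinity>"
        by (rule nn_integral_PInf_AE[OF nkm]) (use nk0 in \<open>simp add: nk_def\<close>)
      moreover have "AE \<xi> in completion P. lsc (f \<xi>)" using f_lsc by (rule AE_completion)
      ultimately have AEconv: "AE \<xi> in completion P. (SUP k. gk k \<xi>) = f \<xi> x"
      proof eventually_elim
        case (elim \<xi>)
        have "envelope f (real \<kappa>0) \<xi> x \<noteq> -\<infinity>"
        proof
          assume "envelope f (real \<kappa>0) \<xi> x = -\<infinity>"
          then have "e2ennreal (max (- gk 0 \<xi>) 0) = \<infinity>" unfolding g0 by simp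
          then show False using elim(1) by simp
        qed
        then show ?case unfolding gk_def by (intro env_conv[where f=f and \<xi>=\<xi>, OF elim(2)]) simp_all
      qed
      have pos_pt: "(SUP k. e2ennreal (max (gk k \<xi>) 0)) = e2ennreal (max (f \<xi> x) 0)"
        if conv: "(SUP k. gk k \<xi>) = f \<xi> x" for \<xi>
      proof -
        have inc: "incseq (\<lambda>k. gk k \<xi>)" by (rule incseq_SucI) (rule gmono)
        have "(\<lambda>k. gk k \<xi>) \<longlonglongrightarrow> f \<xi> x" using LIMSEQ_SUP[OF inc] conv by simp
        then have t1: "(\<lambda>k. e2ennreal (max (gk k \<xi>) 0)) \<longlonglongrightarrow> e2ennreal (max (f \<xi> x) 0)"
          by (intro tendsto_intros)
        have inc2: "incseq (\<lambda>k. e2ennreal (max (gk k \<xi>) 0))"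
          by (rule incseq_SucI) (intro e2ennreal_mono max.mono gmono order_refl)
        show ?thesis using LIMSEQ_unique[OF LIMSEQ_SUP[OF inc2] t1] .
      qed
      have neg_pt: "(INF k. e2ennreal (max (- gk k \<xi>) 0)) = e2ennreal (max (- f \<xi> x) 0)"
        if conv: "(SUP k. gk k \<xi>) = f \<xi> x" for \<xi>
      proof -
        have inc: "incseq (\<lambda>k. gk k \<xi>)" by (rule incseq_SucI) (rule gmono)
        have tf: "(\<lambda>k. gk k \<xi>) \<longlonglongrightarrow> f \<xi> x" using LIMSEQ_SUP[OF inc] conv by simp
        have t1: "(\<lambda>k. e2ennreal (max (- gk k \<xi>) 0)) \<longlonglongrightarrow> e2ennreal (max (- f \<xi> x) 0)"
          by (intro tendsto_intros tf)
        have dec2: "decseq (\<lambda>k. e2ennreal (max (- gk k \<xi>) 0))"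
          by (rule decseq_SucI) (intro e2ennreal_mono max.mono order_refl, simp add: gmono)
        show ?thesis using LIMSEQ_unique[OF LIMSEQ_INF[OF dec2] t1] .
      qed
      have posI: "(\<integral>\<^sup>+ \<xi>. e2ennreal (max (f \<xi> x) 0) \<partial>completion P) = (SUP k. pk k)"
      proof -
        have "(\<integral>\<^sup>+ \<xi>. e2ennreal (max (f \<xi> x) 0) \<partial>completion P)
            = (\<integral>\<^sup>+ \<xi>. (SUP k. e2ennreal (max (gk k \<xi>) 0)) \<partial>completion P)"
          by (rule nn_integral_cong_AE) (use AEconv pos_pt in \<open>auto elim!: AE_mp\<close>)
        also have "\<dots> = (SUP k. pk k)" unfolding pk_def
        proof (rule nn_integral_monotone_convergence_SUP_AE)
          show "AE \<xi> in completion P. e2ennreal (max (gk i \<xi>) 0) \<le> e2ennreal (max (gk (Suc i) \<xi>) 0)" for i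
            by (intro AE_I2 e2ennreal_mono max.mono gmono order_refl)
          show "(\<lambda>\<xi>. e2ennreal (max (gk i \<xi>) 0)) \<in> borel_measurable (completion P)" for i by (rule pkm)
        qed
        finally show ?thesis .
      qed
      have negI: "(\<integral>\<^sup>+ \<xi>. e2ennreal (max (- f \<xi> x) 0) \<partial>completion P) = (INF k. nk k)"
      proof -
        have "(\<integral>\<^sup>+ \<xi>. e2ennreal (max (- f \<xi> x) 0) \<partial>completion P)
            = (\<integral>\<^sup>+ \<xi>. (INF k. e2ennreal (max (- gk k \<xi>) 0)) \<partial>completion P)"
          by (rule nn_integral_cong_AE) (use AEconv neg_pt in \<open>auto elim!: AE_mp\<close>)
        also have "\<dots> = (INF k. nk k)" unfolding nk_def
        proof (rule nn_integral_monotone_convergence_INF_AE')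
          show "AE \<xi> in completion P. e2ennreal (max (- gk (Suc i) \<xi>) 0) \<le> e2ennreal (max (- gk i \<xi>) 0)" for i
            by (intro AE_I2 e2ennreal_mono max.mono order_refl) (simp add: gmono)
          show "(\<lambda>\<xi>. e2ennreal (max (- gk i \<xi>) 0)) \<in> borel_measurable (completion P)" for i by (rule nkm)
          show "(\<integral>\<^sup>+ \<xi>. e2ennreal (max (- gk 0 \<xi>) 0) \<partial>completion P) < \<infinity>"
            using nk0 unfolding nk_def by simp
        qed
        finally show ?thesis .
      qed
      have EPf: "Efun P f x = enn2ereal (SUP k. pk k) - enn2ereal (INF k. nk k)"
        unfolding Efun_def EE_def posI negI ..
      have pinc: "incseq pk" unfolding pk_def
        by (rule incseq_SucI) (intro nn_integral_mono e2ennreal_mono max.mono gmono order_refl)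
      have ndec: "decseq nk" unfolding nk_def
        by (rule decseq_SucI) (intro nn_integral_mono e2ennreal_mono max.mono order_refl, simp add: gmono)
      have tp: "(\<lambda>k. enn2ereal (pk k)) \<longlonglongrightarrow> enn2ereal (SUP k. pk k)"
        using LIMSEQ_SUP[OF pinc] by (rule tendsto_enn2erealI)
      have tn: "(\<lambda>k. enn2ereal (nk k)) \<longlonglongrightarrow> enn2ereal (INF k. nk k)"
        using LIMSEQ_INF[OF ndec] by (rule tendsto_enn2erealI)
      have "(INF k. nk k) \<le> nk 0" by (rule INF_lower) simp
      then have "(INF k. nk k) < top" using nk0 by (rule le_less_trans)
      then have "(INF k. nk k) \<noteq> top" by (rule less_imp_neq)
      then have nfin: "enn2ereal (INF k. nk k) \<noteq> \<infinity>" by (simp only: enn2ereal_eq_top_iff not_False_eq_True)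
      have nnn: "enn2ereal (INF k. nk k) \<noteq> -\<infinity>"
        using enn2ereal_nonneg[of "INF k. nk k"] by auto
      have "(\<lambda>k. enn2ereal (pk k) - enn2ereal (nk k)) \<longlonglongrightarrow> enn2ereal (SUP k. pk k) - enn2ereal (INF k. nk k)"
        by (rule tendsto_diff_ereal_general[OF tp tn]) (use nfin nnn in auto)
      then have "enn2ereal (SUP k. pk k) - enn2ereal (INF k. nk k) \<le> J x"
        by (rule Lim_bounded[where M=0]) (use stepk in auto)
      then show ?thesis unfolding EPf .
    qed
  qed

  show ?thesis using part1 part2 unfolding J_def by auto
qed

end
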